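(* A Steiner quadruple system of order $n$ has a spanning Euler tour if and only if $n\ge 8$ and $n\equiv 2$ or $4 \pmod 6$.
   Context: A Steiner quadruple system of order $n$ is a $4$-uniform hypergraph on $n$ vertices (edges are $4$-subsets, called blocks) in which every $3$-subset of vertices is contained in exactly one edge; such systems exist only when $n\equiv 2,4\pmod 6$. A closed walk is a cyclic sequence $v_1,e_1,\dots,v_t,e_t$ of vertices and edges with $\{v_i,v_{i+1}\}\subseteq e_i$ and $v_i\ne v_{i+1}$ for all $i$ (indices modulo $t$). An Euler tour is a closed walk in which every edge occurs exactly once among $e_1,\dots,e_t$; it is spanning if every vertex occurs among $v_1,\dots,v_t$. *)

theory Defs
  imports Main
begin

definition SQS :: "'a set \<Rightarrow> 'a set set \<Rightarrow> bool" where
  "SQS V B \<longleftrightarrow> finite V \<and> (\<forall>e\<in>B. e \<subseteq> V \<and> card e = 4) \<and>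
     (\<forall>T. T \<subseteq> V \<and> card T = 3 \<longrightarrow> (\<exists>!e. e \<in> B \<and> T \<subseteq> e))"

text \<open>A closed walk v_1,e_1,...,v_t,e_t (t \<ge> 1), given by the lists vs = [v_1..v_t]
  and es = [e_1..e_t]; indices are taken modulo t.\<close>
definition closed_walk :: "'a set set \<Rightarrow> 'a list \<Rightarrow> 'a set list \<Rightarrow> bool" where
  "closed_walk B vs es \<longleftrightarrow> length vs = length es \<and> length vs \<ge> 1 \<and>
     (\<forall>i < length vs. es ! i \<in> B \<and>
        {vs ! i, vs ! ((i + 1) mod length vs)} \<subseteq> es ! i \<and>
        vs ! i \<noteq> vs ! ((i + 1) mod length vs))"

definition euler_tour :: "'a set set \<Rightarrow> 'a list \<Rightarrow> 'a set list \<Rightarrow> bool" where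
  "euler_tour B vs es \<longleftrightarrow> closed_walk B vs es \<and> distinct es \<and> set es = B"

definition has_spanning_euler_tour :: "'a set \<Rightarrow> 'a set set \<Rightarrow> bool" where
  "has_spanning_euler_tour V B \<longleftrightarrow> (\<exists>vs es. euler_tour B vs es \<and> V \<subseteq> set vs)"

end

theory Submission
  imports Defs "Graph_Theory.Graph_Theory"
begin


locale sqs =
  fixes V :: "'a set" and B :: "'a set set"
  assumes S: "SQS V B"
begin

lemma finV: "finite V" using S by (simp add: SQS_def)
lemma blk: "e \<in> B \<Longrightarrow> e \<subseteq> V \<and> card e = 4" using S by (simp add: SQS_def)
lemma finB: "finite B"
proof -
  have "B \<subseteq> Pow V" using blk by auto
  thus ?thesis using finV finite_subset by blast
qed
lemma fin_blk: "e \<in> B \<Longrightarrow> finite e" using blk finV finite_subset by blast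

lemma uniq: "T \<subseteq> V \<Longrightarrow> card T = 3 \<Longrightarrow> \<exists>!e. e \<in> B \<and> T \<subseteq> e"
  using S by (simp add: SQS_def)

lemma ex3: assumes "a \<in> V" "b \<in> V" "c \<in> V" "a \<noteq> b" "a \<noteq> c" "b \<noteq> c"
  shows "\<exists>e\<in>B. a \<in> e \<and> b \<in> e \<and> c \<in> e"
proof -
  have "card {a,b,c} = 3" using assms by auto
  then obtain e where "e \<in> B" "{a,b,c} \<subseteq> e" using uniq[of "{a,b,c}"] assms by auto
  thus ?thesis by auto
qed

lemma three_eq: assumes "e \<in> B" "f \<in> B" "a \<noteq> b" "a \<noteq> c" "b \<noteq> c"
   "a \<in> e" "b \<in> e" "c \<in> e" "a \<in> f" "b \<in> f" "c \<in> f"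
  shows "e = f"
proof -
  have "card {a,b,c} = 3" using assms by auto
  moreover have "{a,b,c} \<subseteq> V" using assms blk by auto
  ultimately show ?thesis using uniq[of "{a,b,c}"] assms by auto
qed

lemma pairpart:
  assumes "p \<in> V" "q \<in> V" "p \<noteq> q"
  shows "2 * card {e\<in>B. p \<in> e \<and> q \<in> e} + 2 = card V"
proof -
  let ?F = "{e\<in>B. p \<in> e \<and> q \<in> e}"
  have finF: "finite ?F" using finB by auto
  have U: "(\<Union>e\<in>?F. e - {p,q}) = V - {p,q}"
  proof
    show "(\<Union>e\<in>?F. e - {p,q}) \<subseteq> V - {p,q}" using blk by auto
    show "V - {p,q} \<subseteq> (\<Union>e\<in>?F. e - {p,q})"
    proof
      fix z assume z: "z \<in> V - {p,q}"
      then obtain e where "e\<in>B" "p\<in>e" "q\<in>e" "z\<in>e" using ex3[of p q z] assms by auto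
      thus "z \<in> (\<Union>e\<in>?F. e - {p,q})" using z by auto
    qed
  qed
  have D: "\<forall>e\<in>?F. \<forall>f\<in>?F. e \<noteq> f \<longrightarrow> (e - {p,q}) \<inter> (f - {p,q}) = {}"
  proof (intro ballI impI)
    fix e f assume ef: "e \<in> ?F" "f \<in> ?F" "e \<noteq> f"
    show "(e - {p,q}) \<inter> (f - {p,q}) = {}"
    proof (rule ccontr)
      assume "(e - {p,q}) \<inter> (f - {p,q}) \<noteq> {}"
      then obtain z where "z \<in> e" "z \<in> f" "z \<noteq> p" "z \<noteq> q" by auto
      thus False using three_eq[of e f p q z] ef assms by simp
    qed
  qed
  have "card (\<Union>e\<in>?F. e - {p,q}) = (\<Sum>e\<in>?F. card (e - {p,q}))"
    by (rule card_UN_disjoint[OF finF _ D]) (simp add: fin_blk)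
  hence "card (V - {p,q}) = (\<Sum>e\<in>?F. card (e - {p,q}))" using U by simp
  also have "\<dots> = (\<Sum>e\<in>?F. 2)"
  proof (rule sum.cong)
    fix e assume "e \<in> ?F"
    hence "{p,q} \<subseteq> e" "finite e" "card e = 4" using fin_blk blk by auto
    hence "card (e - {p,q}) = card e - card {p,q}" by (simp add: card_Diff_subset)
    thus "card (e - {p,q}) = 2" using \<open>card e = 4\<close> assms by simp
  qed simp
  finally have "card (V - {p,q}) = 2 * card ?F" by simp
  moreover have "card {p,q} \<le> card V" using assms finV by (intro card_mono) auto
  hence "card (V - {p,q}) + 2 = card V"
    using assms finV by (simp add: card_Diff_subset)
  ultimately show ?thesis by simp
qed

definition P2 :: "'a set \<Rightarrow> 'a set set" where "P2 S = {P. P \<subseteq> S \<and> card P = 2}"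

lemma three_choose_two: "(3::nat) choose 2 = 3" by (simp add: choose_two)

lemma finite_P2: "finite S \<Longrightarrow> finite (P2 S)"
  unfolding P2_def by (rule finite_subset[of _ "Pow S"]) auto

lemma card_P2: "finite S \<Longrightarrow> card (P2 S) = card S choose 2"
  unfolding P2_def by (simp add: n_subsets)

lemma derived_le:
  assumes "u \<in> V" "S \<subseteq> V - {u}"
  shows "3 * card {e\<in>B. u \<in> e \<and> e - {u} \<subseteq> S} \<le> card S choose 2"
proof -
  let ?F = "{e\<in>B. u \<in> e \<and> e - {u} \<subseteq> S}"
  have finF: "finite ?F" using finB by auto
  have finS: "finite S" using assms finV finite_subset by blast
  have D: "\<forall>e\<in>?F. \<forall>f\<in>?F. e \<noteq> f \<longrightarrow> P2 (e - {u}) \<inter> P2 (f - {u}) = {}"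
  proof (intro ballI impI)
    fix e f assume ef: "e \<in> ?F" "f \<in> ?F" "e \<noteq> f"
    show "P2 (e - {u}) \<inter> P2 (f - {u}) = {}"
    proof (rule ccontr)
      assume "P2 (e - {u}) \<inter> P2 (f - {u}) \<noteq> {}"
      then obtain P where P: "P \<subseteq> e - {u}" "P \<subseteq> f - {u}" "card P = 2" unfolding P2_def by auto
      then obtain a b where "P = {a,b}" "a \<noteq> b" by (meson card_2_iff)
      thus False using three_eq[of e f u a b] ef P by auto
    qed
  qed
  have "card (\<Union>e\<in>?F. P2 (e - {u})) = (\<Sum>e\<in>?F. card (P2 (e - {u})))"
    by (rule card_UN_disjoint[OF finF _ D]) (simp_all add: finite_P2 fin_blk)
  also have "\<dots> = (\<Sum>e\<in>?F. 3)"
  proof (rule sum.cong)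
    fix e assume e: "e \<in> ?F"
    hence "card (e - {u}) = 3" using blk fin_blk by auto
    thus "card (P2 (e - {u})) = 3" using card_P2[of "e - {u}"] fin_blk e three_choose_two by simp
  qed simp
  finally have "card (\<Union>e\<in>?F. P2 (e - {u})) = 3 * card ?F" by simp
  moreover have "(\<Union>e\<in>?F. P2 (e - {u})) \<subseteq> P2 S" unfolding P2_def by auto
  hence "card (\<Union>e\<in>?F. P2 (e - {u})) \<le> card (P2 S)" by (rule card_mono[OF finite_P2[OF finS]])
  ultimately show ?thesis using card_P2[OF finS] by simp
qed

lemma derived_eq:
  assumes "u \<in> V"
  shows "3 * card {e\<in>B. u \<in> e} = card (V - {u}) choose 2"
proof -
  let ?F = "{e\<in>B. u \<in> e}"
  have finF: "finite ?F" using finB by auto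
  have D: "\<forall>e\<in>?F. \<forall>f\<in>?F. e \<noteq> f \<longrightarrow> P2 (e - {u}) \<inter> P2 (f - {u}) = {}"
  proof (intro ballI impI)
    fix e f assume ef: "e \<in> ?F" "f \<in> ?F" "e \<noteq> f"
    show "P2 (e - {u}) \<inter> P2 (f - {u}) = {}"
    proof (rule ccontr)
      assume "P2 (e - {u}) \<inter> P2 (f - {u}) \<noteq> {}"
      then obtain P where P: "P \<subseteq> e - {u}" "P \<subseteq> f - {u}" "card P = 2" unfolding P2_def by auto
      then obtain a b where "P = {a,b}" "a \<noteq> b" by (meson card_2_iff)
      thus False using three_eq[of e f u a b] ef P by auto
    qed
  qed
  have "card (\<Union>e\<in>?F. P2 (e - {u})) = (\<Sum>e\<in>?F. card (P2 (e - {u})))"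
    by (rule card_UN_disjoint[OF finF _ D]) (simp_all add: finite_P2 fin_blk)
  also have "\<dots> = (\<Sum>e\<in>?F. 3)"
  proof (rule sum.cong)
    fix e assume e: "e \<in> ?F"
    hence "card (e - {u}) = 3" using blk fin_blk by auto
    thus "card (P2 (e - {u})) = 3" using card_P2[of "e - {u}"] fin_blk e three_choose_two by simp
  qed simp
  finally have "card (\<Union>e\<in>?F. P2 (e - {u})) = 3 * card ?F" by simp
  moreover have "(\<Union>e\<in>?F. P2 (e - {u})) = P2 (V - {u})"
  proof
    show "(\<Union>e\<in>?F. P2 (e - {u})) \<subseteq> P2 (V - {u})" unfolding P2_def using blk by auto
    show "P2 (V - {u}) \<subseteq> (\<Union>e\<in>?F. P2 (e - {u}))"
    proof
      fix P assume "P \<in> P2 (V - {u})"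
      then obtain a b where ab: "P = {a,b}" "a \<noteq> b" "a \<in> V" "b \<in> V" "a \<noteq> u" "b \<noteq> u"
        unfolding P2_def by (auto simp: card_2_iff)
      then obtain e where "e\<in>B" "u\<in>e" "a\<in>e" "b\<in>e" using ex3[of u a b] assms by auto
      thus "P \<in> (\<Union>e\<in>?F. P2 (e - {u}))" using ab unfolding P2_def by auto
    qed
  qed
  ultimately show ?thesis using card_P2[of "V - {u}"] finV by simp
qed

end


lemma two_choose: "2 * (m choose 2) = m * (m - (1::nat))"
proof -
  have "even (m * (m - 1))"
  proof (cases "even m")
    case True thus ?thesis by simp
  next
    case False hence "even (m - 1)" by (cases m) auto
    thus ?thesis by simp
  qed
  thus ?thesis by (simp add: choose_two)
qed

lemma arithA: fixes n c :: nat assumes "n \<ge> 8" "1 \<le> c" "c + 3 \<le> n"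
  shows "(n-c-1)*(n-c-2) + 6*c < (n-1)*(n-2)"
proof -
  obtain d where d: "n = c + 3 + d" using assms(3) le_Suc_ex by (metis add.commute)
  have "6*c < (c+2*d+3)*c" using assms d by (intro mult_strict_right_mono) auto
  hence "(d+2)*(d+1) + 6*c < (c+d+2)*(c+d+1)" by (simp add: algebra_simps)
  moreover have "n-c-1 = d+2" "n-c-2 = d+1" "n-1 = c+d+2" "n-2 = c+d+1" using d by auto
  ultimately show ?thesis by simp
qed
lemma arithB: fixes n :: nat assumes "n \<ge> 8" shows "\<not> 2*((n-2)*(n-4)) \<le> 6*(n-1)"
proof -
  obtain d where d: "n = 8 + d" using assms le_Suc_ex by metis
  show ?thesis using d by (simp add: algebra_simps)
qed
lemma arithC: fixes n :: nat assumes "n \<ge> 8" shows "6*(n-2) < (n-1)*(n-2)"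
proof -
  obtain d where d: "n = 8 + d" using assms le_Suc_ex by metis
  show ?thesis using d by (simp add: algebra_simps)
qed

context sqs begin

lemma card_le1_3: assumes "a \<noteq> b" "a \<noteq> c" "b \<noteq> c"
  shows "card {e\<in>B. a\<in>e \<and> b\<in>e \<and> c\<in>e} \<le> 1"
proof -
  have fin: "finite {e\<in>B. a\<in>e \<and> b\<in>e \<and> c\<in>e}" using finB by simp
  have "\<forall>e\<in>{e\<in>B. a\<in>e \<and> b\<in>e \<and> c\<in>e}. \<forall>f\<in>{e\<in>B. a\<in>e \<and> b\<in>e \<and> c\<in>e}. e = f"
  proof (intro ballI)
    fix e f assume "e \<in> {e\<in>B. a\<in>e \<and> b\<in>e \<and> c\<in>e}" "f \<in> {e\<in>B. a\<in>e \<and> b\<in>e \<and> c\<in>e}"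
    thus "e = f" using three_eq[of e f a b c] assms by simp
  qed
  thus ?thesis using card_le_Suc0_iff_eq[OF fin] by simp
qed

lemma six_b: assumes "u \<in> V" shows "6 * card {e\<in>B. u\<in>e} = (card V - 1) * (card V - 2)"
proof -
  have "card (V - {u}) = card V - 1" using assms finV by simp
  hence "6 * card {e\<in>B. u\<in>e} = 2 * ((card V - 1) choose 2)" using derived_eq[OF assms] by simp
  also have "\<dots> = (card V - 1) * (card V - 1 - 1)" by (simp only: two_choose)
  also have "card V - 1 - 1 = card V - 2" by simp
  finally show ?thesis .
qed

lemma six_out: assumes "u \<in> V" "S \<subseteq> V - {u}"
  shows "6 * card {e\<in>B. u\<in>e \<and> e - {u} \<subseteq> S} \<le> card S * (card S - 1)"
  using derived_le[OF assms] two_choose[of "card S"] by linarith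

lemma lam_eq: assumes "p \<in> V" "q \<in> V" "p \<noteq> q"
  shows "2 * card {e\<in>B. p\<in>e \<and> q\<in>e} + 2 = card V"
  using pairpart[OF assms] .

end

locale sqsxy = sqs +
  fixes x y :: 'a
  assumes xV: "x \<in> V" and yV: "y \<in> V" and xy: "x \<noteq> y" and n8: "card V \<ge> 8"
begin

definition F where "F = {e\<in>B. x\<in>e \<and> y\<in>e}"

definition adj :: "'a set set \<Rightarrow> ('a set \<Rightarrow> 'a) \<Rightarrow> ('a set \<Rightarrow> 'a) \<Rightarrow> ('a \<times> 'a) set" where
  "adj T ta tb = {(ta e, tb e) |e. e \<in> T} \<union> {(tb e, ta e) |e. e \<in> T}"

definition tr where
  "tr C T ta tb \<longleftrightarrow> C \<subseteq> V \<and> x \<in> C \<and> T \<subseteq> B \<and> T \<inter> F = {} \<and> finite T \<and> card T + 1 = card C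
     \<and> (\<forall>e\<in>T. ta e \<in> e \<and> tb e \<in> e \<and> ta e \<noteq> tb e \<and> ta e \<in> C \<and> tb e \<in> C)
     \<and> (\<forall>z\<in>C. (x,z) \<in> (adj T ta tb)\<^sup>*)"

lemma tr_init: "tr {x} {} ta tb"
  unfolding tr_def using xV by auto

lemma adj_mono: assumes "e \<notin> T"
  shows "adj T ta tb \<subseteq> adj (insert e T) (ta(e:=c)) (tb(e:=u))"
  unfolding adj_def using assms by auto

lemma tr_ext:
  assumes t: "tr C T ta tb" and u: "u \<in> V" "u \<notin> C" and e: "e \<in> B" "e \<notin> T" "e \<notin> F"
    and c: "c \<in> C" "c \<in> e" and ue: "u \<in> e"
  shows "tr (insert u C) (insert e T) (ta(e:=c)) (tb(e:=u))"
proof -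
  let ?A = "adj T ta tb" and ?A' = "adj (insert e T) (ta(e:=c)) (tb(e:=u))"
  have sub: "?A \<subseteq> ?A'" by (rule adj_mono[OF e(2)])
  have cu: "(c,u) \<in> ?A'" unfolding adj_def by auto
  have fC: "finite C" using t finV finite_subset unfolding tr_def by blast
  have conn: "\<forall>z\<in>insert u C. (x,z) \<in> ?A'\<^sup>*"
  proof
    fix z assume "z \<in> insert u C"
    moreover have "\<forall>z\<in>C. (x,z) \<in> ?A'\<^sup>*" using t rtrancl_mono[OF sub] unfolding tr_def by blast
    moreover have "(x,u) \<in> ?A'\<^sup>*"
      using \<open>\<forall>z\<in>C. (x,z) \<in> ?A'\<^sup>*\<close> c(1) cu by (meson rtrancl.rtrancl_into_rtrancl)
    ultimately show "(x,z) \<in> ?A'\<^sup>*" by blast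
  qed
  have "c \<noteq> u" using c u by auto
  have "card (insert e T) = card T + 1" using e t unfolding tr_def by simp
  moreover have "card (insert u C) = card C + 1" using fC u by simp
  moreover have "card T + 1 = card C" using t unfolding tr_def by auto
  ultimately have A: "card (insert e T) + 1 = card (insert u C)" by simp
  have "\<forall>f\<in>insert e T. (ta(e:=c)) f \<in> f \<and> (tb(e:=u)) f \<in> f \<and> (ta(e:=c)) f \<noteq> (tb(e:=u)) f
       \<and> (ta(e:=c)) f \<in> insert u C \<and> (tb(e:=u)) f \<in> insert u C"
    using t c ue \<open>c \<noteq> u\<close> unfolding tr_def by auto
  moreover have "insert u C \<subseteq> V" "insert e T \<subseteq> B" "insert e T \<inter> F = {}" "finite (insert e T)"
    using t u e unfolding tr_def by auto
  moreover have "x \<in> insert u C" using t unfolding tr_def by auto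
  ultimately show ?thesis using conn A unfolding tr_def by blast
qed

lemma F_le1: assumes "u \<noteq> x" "u \<noteq> y" shows "card {e\<in>B. u \<in> e \<and> e \<in> F} \<le> 1"
proof -
  have "{e\<in>B. u \<in> e \<and> e \<in> F} = {e\<in>B. x\<in>e \<and> y\<in>e \<and> u\<in>e}" unfolding F_def by auto
  thus ?thesis using card_le1_3[of x y u] assms xy by auto
qed

lemma step_general:
  assumes t: "tr C T ta tb" and u: "u \<in> V" "u \<notin> C" "u \<noteq> y" and cC: "card C + 3 \<le> card V"
  shows "\<exists>e\<in>B. u \<in> e \<and> e \<notin> T \<and> e \<notin> F \<and> (\<exists>c\<in>C. c \<in> e)"
proof (rule ccontr)
  assume H: "\<not> ?thesis"
  let ?n = "card V" and ?c = "card C"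
  let ?Bu = "{e\<in>B. u\<in>e}" and ?Out = "{e\<in>B. u\<in>e \<and> e - {u} \<subseteq> V - C - {u}}"
    and ?Fu = "{e\<in>B. u \<in> e \<and> e \<in> F}"
  have CV: "C \<subseteq> V" "x \<in> C" and fT: "finite T" and cT: "card T + 1 = ?c" using t unfolding tr_def by auto
  have ux: "u \<noteq> x" using u CV by auto
  have c1: "1 \<le> ?c" using CV finV by (metis One_nat_def Suc_leI card_gt_0_iff empty_iff finite_subset)
  have sub: "?Bu \<subseteq> ?Out \<union> ?Fu \<union> T"
  proof
    fix e assume e: "e \<in> ?Bu"
    show "e \<in> ?Out \<union> ?Fu \<union> T"
    proof (cases "e \<in> T \<or> e \<in> F")
      case True thus ?thesis using e by auto
    next
      case False
      hence "\<forall>c\<in>C. c \<notin> e" using H e by auto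
      hence "e - {u} \<subseteq> V - C - {u}" using e blk by auto
      thus ?thesis using e by auto
    qed
  qed
  have "card ?Bu \<le> card (?Out \<union> ?Fu \<union> T)" by (rule card_mono) (use finB fT sub in auto)
  also have "\<dots> \<le> card ?Out + card ?Fu + card T"
    by (metis (no_types, lifting) add_le_mono card_Un_le le_refl order_trans)
  also have "\<dots> \<le> card ?Out + 1 + card T" using F_le1[OF ux u(3)] by simp
  finally have le: "card ?Bu \<le> card ?Out + 1 + card T" .
  have s: "card (V - C - {u}) = ?n - ?c - 1"
  proof -
    have "card (V - C) = ?n - ?c" using CV finV by (simp add: card_Diff_subset finite_subset)
    moreover have "u \<in> V - C" using u by auto
    ultimately show ?thesis using finV by simp
  qed
  have o6': "6 * card ?Out \<le> (?n - ?c - 1) * (?n - ?c - 1 - 1)"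
    using six_out[of u "V - C - {u}"] u s by auto
  have "?n - ?c - 1 - 1 = ?n - ?c - 2" by simp
  hence o6: "6 * card ?Out \<le> (?n - ?c - 1) * (?n - ?c - 2)" using o6' by simp
  have b6: "6 * card ?Bu = (?n - 1) * (?n - 2)" using six_b[OF u(1)] .
  have "(?n - 1) * (?n - 2) \<le> (?n - ?c - 1) * (?n - ?c - 2) + 6 * ?c"
    using le o6 b6 cT by linarith
  thus False using arithA[of ?n ?c] n8 c1 cC by linarith
qed

end


lemma arithB2: fixes n :: nat assumes "n \<ge> 8" shows "\<not> 2*((n-1)*(n-2)) \<le> 6*(n-1) + 6*(n-2)"
proof -
  obtain d where d: "n = 8 + d" using assms le_Suc_ex by metis
  show ?thesis using d by (simp add: algebra_simps)
qed

context sqsxy begin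

lemma tr_facts: assumes "tr C T ta tb"
  shows "C \<subseteq> V" "x \<in> C" "T \<subseteq> B" "T \<inter> F = {}" "finite T" "card T + 1 = card C"
   "\<And>e. e \<in> T \<Longrightarrow> ta e \<in> e \<and> tb e \<in> e \<and> ta e \<noteq> tb e \<and> ta e \<in> C \<and> tb e \<in> C"
  using assms unfolding tr_def by auto

lemma exists_outside: assumes "C \<subseteq> V" "card C < card V" shows "\<exists>u. u \<in> V \<and> u \<notin> C"
proof (rule ccontr)
  assume "\<not> ?thesis" hence "V \<subseteq> C" by auto
  hence "card V \<le> card C" using assms finV by (meson card_mono finite_subset)
  thus False using assms by simp
qed

lemma y_step:
  assumes t: "tr C T ta tb" and c2: "card C = 2" and yC: "y \<notin> C"
  shows "\<exists>C' T' ta' tb'. tr C' T' ta' tb' \<and> card C' = 3 \<and> y \<in> C'"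
proof -
  have xC: "x \<in> C" using tr_facts[OF t] by simp
  have fC: "finite C" using tr_facts(1)[OF t] finV finite_subset by blast
  have "card (C - {x}) = 1" using c2 xC fC by simp
  then obtain u1 where u1: "C - {x} = {u1}" by (meson card_1_singletonE)
  have C: "C = {x,u1}" "u1 \<noteq> x" using u1 xC by auto
  have u1V: "u1 \<in> V" using tr_facts(1)[OF t] C by auto
  have yu1: "y \<noteq> u1" using yC C by auto
  have l: "2 * card {e\<in>B. u1\<in>e \<and> y\<in>e} + 2 = card V" using lam_eq[OF u1V yV yu1[symmetric]] .
  have le1: "card {e\<in>B. u1\<in>e \<and> y\<in>e \<and> x\<in>e} \<le> 1" using card_le1_3[of u1 y x] C xy yu1 by auto
  have "\<exists>e\<in>B. u1\<in>e \<and> y\<in>e \<and> x \<notin> e"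
  proof (rule ccontr)
    assume "\<not> ?thesis"
    hence "{e\<in>B. u1\<in>e \<and> y\<in>e} \<subseteq> {e\<in>B. u1\<in>e \<and> y\<in>e \<and> x\<in>e}" by auto
    hence "card {e\<in>B. u1\<in>e \<and> y\<in>e} \<le> card {e\<in>B. u1\<in>e \<and> y\<in>e \<and> x\<in>e}"
      using finB by (intro card_mono) auto
    hence "card {e\<in>B. u1\<in>e \<and> y\<in>e} \<le> 1" using le1 by linarith
    thus False using l n8 by linarith
  qed
  then obtain e where e: "e \<in> B" "u1 \<in> e" "y \<in> e" "x \<notin> e" by auto
  have "e \<notin> T"
  proof
    assume "e \<in> T"
    hence "ta e \<in> C" "tb e \<in> C" "ta e \<noteq> tb e" "ta e \<in> e" "tb e \<in> e" using tr_facts(7)[OF t] by auto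
    hence "x \<in> e" using C by auto
    thus False using e by simp
  qed
  moreover have "e \<notin> F" using e unfolding F_def by auto
  ultimately have "tr (insert y C) (insert e T) (ta(e:=u1)) (tb(e:=y))"
    using tr_ext[OF t yV yC e(1) _ _ _ e(2) e(3)] C by auto
  moreover have "card (insert y C) = 3" using C yC yu1 xy by auto
  ultimately show ?thesis by blast
qed

lemma final_one:
  assumes t: "tr C T ta tb" and VC: "V - C = {u1,u2}" "u1 \<noteq> u2"
    and e: "e \<in> B" "e \<notin> T" "e \<notin> F" "u1 \<in> e" "u2 \<notin> e" and cC: "card C + 2 = card V"
    and yC: "y \<in> C"
  shows "\<exists>T' ta' tb'. tr V T' ta' tb'"
proof -
  have CV: "C \<subseteq> V" and xC: "x \<in> C" using tr_facts[OF t] by auto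
  have u1V: "u1 \<in> V" "u1 \<notin> C" "u2 \<in> V" "u2 \<notin> C" using VC by auto
  have "card e = 4" "finite e" using blk fin_blk e by auto
  hence "card (e - {u1}) = 3" using e by simp
  hence "e - {u1} \<noteq> {}" by (metis card.empty zero_neq_numeral)
  then obtain c where c: "c \<in> e" "c \<noteq> u1" by auto
  have "c \<in> V" using c e blk by auto
  hence cC1: "c \<in> C" using c e VC by auto
  have t1: "tr (insert u1 C) (insert e T) (ta(e:=c)) (tb(e:=u1))"
    using tr_ext[OF t u1V(1,2) e(1-3) cC1 c(1) e(4)] .
  let ?C1 = "insert u1 C" and ?T1 = "insert e T"
  let ?Bu = "{f\<in>B. u2\<in>f}"
  have "\<exists>f\<in>B. u2 \<in> f \<and> f \<notin> ?T1 \<and> f \<notin> F"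
  proof (rule ccontr)
    assume H: "\<not> ?thesis"
    have "?Bu \<subseteq> T \<union> {f\<in>B. u2 \<in> f \<and> f \<in> F}" using H e by auto
    hence "card ?Bu \<le> card (T \<union> {f\<in>B. u2 \<in> f \<and> f \<in> F})"
      using tr_facts(5)[OF t] finB by (intro card_mono) auto
    also have "\<dots> \<le> card T + card {f\<in>B. u2 \<in> f \<and> f \<in> F}" by (rule card_Un_le)
    also have "\<dots> \<le> card T + 1" using F_le1[of u2] xC yC u1V by auto
    finally have "6 * card ?Bu \<le> 6 * (card V - 2)" using tr_facts(6)[OF t] cC by linarith
    thus False using six_b[OF u1V(3)] arithC[OF n8] by linarith
  qed
  then obtain f where f: "f \<in> B" "u2 \<in> f" "f \<notin> ?T1" "f \<notin> F" by auto
  have "card f = 4" "finite f" using blk fin_blk f by auto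
  hence "card (f - {u2}) = 3" using f by simp
  hence "f - {u2} \<noteq> {}" by (metis card.empty zero_neq_numeral)
  then obtain c2 where c2: "c2 \<in> f" "c2 \<noteq> u2" by auto
  have "c2 \<in> V" using c2 f blk by auto
  hence c2C: "c2 \<in> ?C1" using c2 VC by auto
  have "tr (insert u2 ?C1) (insert f ?T1) ((ta(e:=c))(f:=c2)) ((tb(e:=u1))(f:=u2))"
    using tr_ext[OF t1 u1V(3) _ f(1) f(3) f(4) c2C c2(1) f(2)] VC by auto
  moreover have "insert u2 ?C1 = V" using VC CV by auto
  ultimately show ?thesis by auto
qed

lemma final_two:
  assumes t: "tr C T ta tb" and cC: "card C + 2 = card V" and yC: "y \<in> C"
  shows "\<exists>T' ta' tb'. tr V T' ta' tb'"
proof -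
  have CV: "C \<subseteq> V" and xC: "x \<in> C" using tr_facts[OF t] by auto
  have "card (V - C) = 2" using cC CV finV by (simp add: card_Diff_subset finite_subset)
  then obtain u1 u2 where VC: "V - C = {u1,u2}" "u1 \<noteq> u2" by (meson card_2_iff)
  have uV: "u1 \<in> V" "u2 \<in> V" "u1 \<notin> C" "u2 \<notin> C" using VC by auto
  show ?thesis
  proof (cases "\<exists>e\<in>B. e \<notin> T \<and> e \<notin> F \<and> u1 \<in> e \<and> u2 \<notin> e")
    case True
    then obtain e where "e\<in>B" "e \<notin> T" "e \<notin> F" "u1 \<in> e" "u2 \<notin> e" by auto
    thus ?thesis using final_one[OF t VC] cC yC by blast
  next
    case False1: False
    show ?thesis
    proof (cases "\<exists>e\<in>B. e \<notin> T \<and> e \<notin> F \<and> u2 \<in> e \<and> u1 \<notin> e")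
      case True
      then obtain e where "e\<in>B" "e \<notin> T" "e \<notin> F" "u2 \<in> e" "u1 \<notin> e" by auto
      moreover have "V - C = {u2,u1}" "u2 \<noteq> u1" using VC by auto
      ultimately show ?thesis using final_one[OF t] cC yC by blast
    next
      case False2: False
      let ?X1 = "{e\<in>B. u1\<in>e \<and> u2 \<notin> e}" and ?X2 = "{e\<in>B. u2\<in>e \<and> u1 \<notin> e}"
      let ?A1 = "{e\<in>T. u1\<in>e \<and> u2 \<notin> e}" and ?A2 = "{e\<in>T. u2\<in>e \<and> u1 \<notin> e}"
      have fT: "finite T" using tr_facts[OF t] by simp
      have "?X1 \<subseteq> ?A1 \<union> {e\<in>B. u1 \<in> e \<and> e \<in> F}" using False1 by auto
      hence "card ?X1 \<le> card (?A1 \<union> {e\<in>B. u1 \<in> e \<and> e \<in> F})" using fT finB by (intro card_mono) auto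
      also have "\<dots> \<le> card ?A1 + card {e\<in>B. u1 \<in> e \<and> e \<in> F}" by (rule card_Un_le)
      also have "\<dots> \<le> card ?A1 + 1" using F_le1[of u1] xC yC uV by auto
      finally have X1: "card ?X1 \<le> card ?A1 + 1" .
      have "?X2 \<subseteq> ?A2 \<union> {e\<in>B. u2 \<in> e \<and> e \<in> F}" using False2 by auto
      hence "card ?X2 \<le> card (?A2 \<union> {e\<in>B. u2 \<in> e \<and> e \<in> F})" using fT finB by (intro card_mono) auto
      also have "\<dots> \<le> card ?A2 + card {e\<in>B. u2 \<in> e \<and> e \<in> F}" by (rule card_Un_le)
      also have "\<dots> \<le> card ?A2 + 1" using F_le1[of u2] xC yC uV by auto
      finally have X2: "card ?X2 \<le> card ?A2 + 1" .
      have "card ?A1 + card ?A2 = card (?A1 \<union> ?A2)" using fT by (intro card_Un_disjoint[symmetric]) auto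
      also have "\<dots> \<le> card T" using fT by (intro card_mono) auto
      finally have A12: "card ?A1 + card ?A2 \<le> card T" .
      have cT: "card T + 3 = card V" using tr_facts(6)[OF t] cC by simp
      have l: "2 * card {e\<in>B. u1\<in>e \<and> u2\<in>e} + 2 = card V" using lam_eq[OF uV(1,2) VC(2)] .
      have Xe: "\<And>a b. a \<in> V \<Longrightarrow> b \<in> V \<Longrightarrow> a \<noteq> b \<Longrightarrow>
          6 * card {e\<in>B. a\<in>e \<and> b \<notin> e} + 3 * (card V - 2) = (card V - 1) * (card V - 2)"
      proof -
        fix a b assume ab: "a \<in> V" "b \<in> V" "a \<noteq> b"
        have "{e\<in>B. a\<in>e} = {e\<in>B. a\<in>e \<and> b \<notin> e} \<union> {e\<in>B. a\<in>e \<and> b\<in>e}" by auto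
        hence "card {e\<in>B. a\<in>e} = card {e\<in>B. a\<in>e \<and> b \<notin> e} + card {e\<in>B. a\<in>e \<and> b\<in>e}"
          using finB by (simp add: card_Un_disjoint disjoint_iff)
        moreover have "2 * card {e\<in>B. a\<in>e \<and> b\<in>e} + 2 = card V" using lam_eq[OF ab] .
        moreover have "6 * card {e\<in>B. a\<in>e} = (card V - 1) * (card V - 2)" using six_b[OF ab(1)] .
        ultimately show "6 * card {e\<in>B. a\<in>e \<and> b \<notin> e} + 3 * (card V - 2) = (card V - 1) * (card V - 2)"
          by linarith
      qed
      have "6 * card ?X1 + 3 * (card V - 2) = (card V - 1) * (card V - 2)" using Xe[OF uV(1,2) VC(2)] .
      moreover have "6 * card ?X2 + 3 * (card V - 2) = (card V - 1) * (card V - 2)"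
        using Xe[OF uV(2,1)] VC(2) by auto
      ultimately have "2 * ((card V - 1) * (card V - 2)) \<le> 6 * (card V - 1) + 6 * (card V - 2)"
        using X1 X2 A12 cT by linarith
      thus ?thesis using arithB2[OF n8] by blast
    qed
  qed
qed

lemma tree_exists: "\<exists>T ta tb. tr V T ta tb"
proof -
  have "card {x,y} < card V" using n8 xy by simp
  then obtain u1 where u1: "u1 \<in> V" "u1 \<notin> {x,y}" using exists_outside[of "{x,y}"] xV yV by auto
  have t0: "tr {x} {} (\<lambda>_. x) (\<lambda>_. x)" by (rule tr_init)
  obtain e where e: "e\<in>B" "u1 \<in> e" "e \<notin> {}" "e \<notin> F" "x \<in> e"
    using step_general[OF t0 u1(1)] u1 n8 by auto
  have t1: "tr (insert u1 {x}) (insert e {}) ((\<lambda>_. x)(e:=x)) ((\<lambda>_. x)(e:=u1))"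
    by (rule tr_ext[OF t0 u1(1) _ e(1) e(3) e(4) _ e(5) e(2)]) (use u1 in auto)
  have "card (insert u1 {x}) = 2" using u1 by auto
  then obtain C3 T3 ta3 tb3 where t3: "tr C3 T3 ta3 tb3" "card C3 = 3" "y \<in> C3"
    using y_step[OF t1] u1 xy by blast
  have ind: "\<And>k. k + 5 \<le> card V \<Longrightarrow> \<exists>C T ta tb. tr C T ta tb \<and> card C = k + 3 \<and> y \<in> C"
  proof -
    fix k show "k + 5 \<le> card V \<Longrightarrow> \<exists>C T ta tb. tr C T ta tb \<and> card C = k + 3 \<and> y \<in> C"
    proof (induct k)
      case 0 thus ?case using t3 by auto
    next
      case (Suc k)
      then obtain C T ta tb where t: "tr C T ta tb" "card C = k + 3" "y \<in> C" by auto
      have CV: "C \<subseteq> V" using tr_facts[OF t(1)] by simp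
      obtain u where u: "u \<in> V" "u \<notin> C" using exists_outside[OF CV] t Suc.prems by auto
      have uy: "u \<noteq> y" using u t by auto
      obtain e c where ec: "e\<in>B" "u \<in> e" "e \<notin> T" "e \<notin> F" "c \<in> C" "c \<in> e"
        using step_general[OF t(1) u uy] t Suc.prems by auto
      have "tr (insert u C) (insert e T) (ta(e:=c)) (tb(e:=u))"
        using tr_ext[OF t(1) u ec(1) ec(3) ec(4) ec(5) ec(6) ec(2)] .
      moreover have "card (insert u C) = Suc k + 3" using u t finV CV by (simp add: finite_subset)
      ultimately show ?case using t(3) by blast
    qed
  qed
  obtain C T ta tb where t: "tr C T ta tb" "card C = (card V - 5) + 3" "y \<in> C"
    using ind[of "card V - 5"] n8 by auto
  show ?thesis using final_two[OF t(1) _ t(3)] t(2) n8 by auto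
qed

end


lemma handshake:
  assumes "finite V" "finite A" "\<forall>e\<in>A. P e \<subseteq> V \<and> card (P e) = 2"
  shows "(\<Sum>v\<in>V. card {e\<in>A. v \<in> P e}) = 2 * card A"
proof -
  have "(\<Sum>v\<in>V. card {e\<in>A. v \<in> P e}) = (\<Sum>v\<in>V. \<Sum>e\<in>A. of_bool (v \<in> P e))"
  proof (rule sum.cong)
    fix v assume "v \<in> V"
    have "{e\<in>A. v \<in> P e} = A \<inter> {e. v \<in> P e}" by auto
    thus "card {e\<in>A. v \<in> P e} = (\<Sum>e\<in>A. of_bool (v \<in> P e))" using assms(2) by simp
  qed simp
  also have "\<dots> = (\<Sum>e\<in>A. \<Sum>v\<in>V. of_bool (v \<in> P e))" by (rule sum.swap)
  also have "\<dots> = (\<Sum>e\<in>A. 2)"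
  proof (rule sum.cong)
    fix e assume e: "e \<in> A"
    have "V \<inter> {v. v \<in> P e} = P e" using assms e by auto
    thus "(\<Sum>v\<in>V. of_bool (v \<in> P e)) = (2::nat)" using assms e by simp
  qed simp
  finally show ?thesis by simp
qed

lemma parity_sum:
  assumes "finite V"
  shows "even (\<Sum>v\<in>V. f v) = even (card {v\<in>V. odd ((f v)::nat)})"
  using assms
proof (induct V rule: finite_induct)
  case empty thus ?case by simp
next
  case (insert a V)
  have "{v\<in>insert a V. odd (f v)} = (if odd (f a) then insert a {v\<in>V. odd (f v)} else {v\<in>V. odd (f v)})"
    by auto
  moreover have "a \<notin> {v\<in>V. odd (f v)}" using insert by auto
  ultimately show ?case using insert by (auto simp: card_insert_if)
qed

lemma fix_last:
  assumes "finite V" "y \<in> V" "Od \<subseteq> V" "even (card Od)" "even (card {v\<in>V. odd ((f v)::nat)})"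
    "\<forall>v\<in>V. v \<noteq> y \<longrightarrow> (odd (f v) \<longleftrightarrow> v \<in> Od)"
  shows "odd (f y) \<longleftrightarrow> y \<in> Od"
proof -
  let ?S = "{v\<in>V. odd (f v)}"
  have SO: "?S - {y} = Od - {y}" using assms by auto
  have fO: "finite Od" using assms finite_subset by blast
  have fS: "finite ?S" using assms by simp
  show ?thesis
  proof (rule ccontr)
    assume H: "\<not> ?thesis"
    show False
    proof (cases "y \<in> Od")
      case True
      hence "y \<notin> ?S" using H by auto
      hence "?S = Od - {y}" using SO by auto
      hence "card ?S + 1 = card Od" using card_Suc_Diff1[OF fO True] by simp
      thus False using assms(4,5) by (metis Suc_eq_plus1 even_Suc)
    next
      case False
      hence "y \<in> ?S" using H assms by auto
      hence "?S = insert y (Od - {y})" using SO by auto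
      hence "card ?S = card Od + 1" using False fO by simp
      thus False using assms(4,5) by (metis Suc_eq_plus1 even_Suc)
    qed
  qed
qed

context sqsxy begin

lemma F_block_ex: assumes "v \<in> V" "v \<noteq> x" "v \<noteq> y" shows "\<exists>e\<in>F. v \<in> e"
  using ex3[of x y v] assms xV yV xy unfolding F_def by auto

lemma F_block_uniq: assumes "v \<noteq> x" "v \<noteq> y" "e \<in> F" "f \<in> F" "v \<in> e" "v \<in> f" shows "e = f"
  using three_eq[of e f x y v] assms xy unfolding F_def by auto

lemma F_m: assumes "e \<in> F" shows "\<exists>a b. e - {x,y} = {a,b} \<and> a \<noteq> b"
proof -
  have "card e = 4" "finite e" "x \<in> e" "y \<in> e" using assms blk fin_blk unfolding F_def by auto
  hence "card (e - {x,y}) = 2" using xy by (simp add: card_Diff_subset)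
  thus ?thesis by (meson card_2_iff)
qed

lemma absorb:
  assumes Od: "Od \<subseteq> V" "even (card Od)" and e0: "e0 \<in> F" "card ((e0 - {x,y}) \<inter> Od) = 1"
  shows "\<exists>fa fb. (\<forall>e\<in>F. fa e \<in> e \<and> fb e \<in> e \<and> fa e \<noteq> fb e) \<and>
     (\<forall>v\<in>V. odd (card {e\<in>F. v \<in> {fa e, fb e}}) \<longleftrightarrow> v \<in> Od)"
proof -
  have "\<forall>e\<in>F. \<exists>p. e - {x,y} = {fst p, snd p} \<and> fst p \<noteq> snd p" using F_m by fastforce
  then obtain \<phi> where phi: "\<And>e. e \<in> F \<Longrightarrow> e - {x,y} = {fst (\<phi> e), snd (\<phi> e)} \<and> fst (\<phi> e) \<noteq> snd (\<phi> e)"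
    by metis
  define ma where "ma e = fst (\<phi> e)" for e
  define mb where "mb e = snd (\<phi> e)" for e
  have m: "\<And>e. e \<in> F \<Longrightarrow> e - {x,y} = {ma e, mb e} \<and> ma e \<noteq> mb e" using phi ma_def mb_def by auto
  have mi: "\<And>e. e \<in> F \<Longrightarrow> ma e \<in> e \<and> mb e \<in> e \<and> ma e \<noteq> x \<and> ma e \<noteq> y \<and> mb e \<noteq> x \<and> mb e \<noteq> y"
    using m by blast
  have Fx: "\<And>e. e \<in> F \<Longrightarrow> x \<in> e \<and> y \<in> e" unfolding F_def by auto
  define both where "both e \<longleftrightarrow> ma e \<in> Od \<and> mb e \<in> Od" for e
  define none where "none e \<longleftrightarrow> ma e \<notin> Od \<and> mb e \<notin> Od" for e
  define z where "z e = (if ma e \<in> Od then ma e else mb e)" for e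
  define N where "N = card {e\<in>F. none e}"
  define h0 where "h0 = (if odd (N + (if x \<in> Od then 1 else 0)) then x else y)"
  define fa where "fa e = (if both e then ma e else if none e then x else if e = e0 then h0 else y)" for e
  define fb where "fb e = (if both e then mb e else if none e then y else z e)" for e
  have h0xy: "h0 = x \<or> h0 = y" unfolding h0_def by auto
  have one0: "\<not> both e0 \<and> \<not> none e0"
  proof -
    have c1: "card ({ma e0, mb e0} \<inter> Od) = 1" using m[OF e0(1)] e0(2) by simp
    have ne: "ma e0 \<noteq> mb e0" using m[OF e0(1)] by simp
    have "\<not> both e0"
    proof
      assume "both e0" hence "{ma e0, mb e0} \<inter> Od = {ma e0, mb e0}" unfolding both_def by auto
      thus False using c1 ne by simp
    qed
    moreover have "\<not> none e0"
    proof
      assume "none e0" hence "{ma e0, mb e0} \<inter> Od = {}" unfolding none_def by auto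
      thus False using c1 by simp
    qed
    ultimately show ?thesis by simp
  qed
  have valid: "\<forall>e\<in>F. fa e \<in> e \<and> fb e \<in> e \<and> fa e \<noteq> fb e"
  proof
    fix e assume e: "e \<in> F"
    have hx: "fa e \<in> {x,y} \<or> (fa e = ma e \<and> fb e = mb e)" unfolding fa_def fb_def using h0xy by auto
    have zz: "z e \<in> e \<and> z e \<noteq> x \<and> z e \<noteq> y" unfolding z_def using mi[OF e] by simp
    show "fa e \<in> e \<and> fb e \<in> e \<and> fa e \<noteq> fb e"
    proof (cases "both e")
      case True thus ?thesis using mi[OF e] m[OF e] unfolding fa_def fb_def by simp
    next
      case nb: False
      show ?thesis
      proof (cases "none e")
        case True thus ?thesis using nb Fx[OF e] xy unfolding fa_def fb_def by simp
      next
        case False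
        hence "fb e = z e" "fa e \<in> {x,y}" using nb h0xy unfolding fa_def fb_def by auto
        thus ?thesis using zz Fx[OF e] by auto
      qed
    qed
  qed
  let ?f = "\<lambda>v. card {e\<in>F. v \<in> {fa e, fb e}}"
  have finF: "finite F" using finB unfolding F_def by simp
  have inner: "\<forall>v\<in>V. v \<noteq> x \<longrightarrow> v \<noteq> y \<longrightarrow> (odd (?f v) \<longleftrightarrow> v \<in> Od)"
  proof (intro ballI impI)
    fix v assume v: "v \<in> V" "v \<noteq> x" "v \<noteq> y"
    obtain ev where ev: "ev \<in> F" "v \<in> ev" using F_block_ex[OF v] by auto
    have "{e\<in>F. v \<in> {fa e, fb e}} = (if v \<in> {fa ev, fb ev} then {ev} else {})"
    proof -
      have "\<And>e. e \<in> F \<Longrightarrow> v \<in> {fa e, fb e} \<Longrightarrow> e = ev"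
      proof -
        fix e assume e: "e \<in> F" "v \<in> {fa e, fb e}"
        hence "v \<in> e" using valid by auto
        thus "e = ev" using F_block_uniq[OF v(2,3) e(1) ev(1) _ ev(2)] by simp
      qed
      hence U: "\<And>e. e \<in> {e\<in>F. v \<in> {fa e, fb e}} \<Longrightarrow> e = ev" by blast
      show ?thesis
      proof (cases "v \<in> {fa ev, fb ev}")
        case True
        hence "ev \<in> {e\<in>F. v \<in> {fa e, fb e}}" using ev by blast
        hence "{e\<in>F. v \<in> {fa e, fb e}} = {ev}" using U by blast
        thus ?thesis using True by simp
      next
        case False
        hence "{e\<in>F. v \<in> {fa e, fb e}} = {}" using U by blast
        thus ?thesis using False by simp
      qed
    qed
    hence fv: "?f v = (if v \<in> {fa ev, fb ev} then 1 else 0)" by simp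
    have vm: "v = ma ev \<or> v = mb ev" using m[OF ev(1)] ev v by auto
    have "v \<in> {fa ev, fb ev} \<longleftrightarrow> v \<in> Od"
    proof (cases "both ev")
      case True
      hence "fa ev = ma ev" "fb ev = mb ev" unfolding fa_def fb_def by simp_all
      moreover have "ma ev \<in> Od" "mb ev \<in> Od" using True unfolding both_def by simp_all
      ultimately show ?thesis using vm by auto
    next
      case nb: False
      show ?thesis
      proof (cases "none ev")
        case True
        hence "fa ev = x" "fb ev = y" using nb unfolding fa_def fb_def by simp_all
        moreover have "ma ev \<notin> Od" "mb ev \<notin> Od" using True unfolding none_def by simp_all
        ultimately show ?thesis using vm v by auto
      next
        case False
        hence "fb ev = z ev" using nb unfolding fb_def by simp
        moreover have "fa ev = x \<or> fa ev = y" using nb False h0xy unfolding fa_def by simp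
        moreover have "v = z ev \<longleftrightarrow> v \<in> Od"
        proof (cases "ma ev \<in> Od")
          case True
          hence "mb ev \<notin> Od" using nb unfolding both_def by simp
          moreover have "z ev = ma ev" using True unfolding z_def by simp
          ultimately show ?thesis using vm True by auto
        next
          case f2: False
          hence "mb ev \<in> Od" using False unfolding none_def by simp
          moreover have "z ev = mb ev" using f2 unfolding z_def by simp
          ultimately show ?thesis using vm f2 by auto
        qed
        ultimately show ?thesis using v by auto
      qed
    qed
    thus "odd (?f v) \<longleftrightarrow> v \<in> Od" using fv by simp
  qed
  have xpart: "odd (?f x) \<longleftrightarrow> x \<in> Od"
  proof -
    have "{e\<in>F. x \<in> {fa e, fb e}} = {e\<in>F. none e} \<union> (if h0 = x then {e0} else {})"
    proof -
      have "\<And>e. e \<in> F \<Longrightarrow> x \<in> {fa e, fb e} \<longleftrightarrow> none e \<or> (e = e0 \<and> h0 = x)"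
      proof -
        fix e assume e: "e \<in> F"
        have zz: "z e \<noteq> x" unfolding z_def using mi[OF e] by simp
        show "x \<in> {fa e, fb e} \<longleftrightarrow> none e \<or> (e = e0 \<and> h0 = x)"
        proof (cases "both e")
          case True thus ?thesis using mi[OF e] one0 unfolding fa_def fb_def by (auto simp: both_def none_def)
        next
          case nb: False
          show ?thesis
          proof (cases "none e")
            case True thus ?thesis using nb xy unfolding fa_def fb_def by simp
          next
            case False thus ?thesis using nb zz xy unfolding fa_def fb_def by auto
          qed
        qed
      qed
      thus ?thesis using e0(1) by auto
    qed
    moreover have "e0 \<notin> {e\<in>F. none e}" using one0 by simp
    ultimately have "?f x = N + (if h0 = x then 1 else 0)" unfolding N_def using finF by auto
    thus ?thesis unfolding h0_def using xy by auto
  qed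
  have hs: "(\<Sum>v\<in>V. ?f v) = 2 * card F"
    by (rule handshake[OF finV finF]) (use valid blk in \<open>auto simp: F_def\<close>)
  hence "even (card {v\<in>V. odd (?f v)})" using parity_sum[OF finV, of ?f] by simp
  moreover have "\<forall>v\<in>V. v \<noteq> y \<longrightarrow> (odd (?f v) \<longleftrightarrow> v \<in> Od)"
  proof (intro ballI impI)
    fix v assume "v \<in> V" "v \<noteq> y"
    thus "odd (?f v) \<longleftrightarrow> v \<in> Od" using inner xpart by (cases "v = x") auto
  qed
  ultimately have ypart: "odd (?f y) \<longleftrightarrow> y \<in> Od"
    using fix_last[OF finV yV Od(1) Od(2), of ?f] by blast
  have "\<forall>v\<in>V. odd (?f v) \<longleftrightarrow> v \<in> Od"
  proof
    fix v assume "v \<in> V"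
    thus "odd (?f v) \<longleftrightarrow> v \<in> Od" using inner xpart ypart by (cases "v = x"; cases "v = y") auto
  qed
  thus ?thesis using valid by blast
qed

end


lemma card_pair_int: "a \<noteq> b \<Longrightarrow> card ({a,b} \<inter> S) = 1 \<longleftrightarrow> (a \<in> S \<longleftrightarrow> b \<notin> S)"
  by (cases "a \<in> S"; cases "b \<in> S") auto

context sqsxy begin

lemma Xe_lem: assumes ab: "a \<in> V" "b \<in> V" "a \<noteq> b"
  shows "6 * card {e\<in>B. a\<in>e \<and> b \<notin> e} + 3 * (card V - 2) = (card V - 1) * (card V - 2)"
proof -
  have "{e\<in>B. a\<in>e} = {e\<in>B. a\<in>e \<and> b \<notin> e} \<union> {e\<in>B. a\<in>e \<and> b\<in>e}" by auto
  hence "card {e\<in>B. a\<in>e} = card {e\<in>B. a\<in>e \<and> b \<notin> e} + card {e\<in>B. a\<in>e \<and> b\<in>e}"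
    using finB by (simp add: card_Un_disjoint disjoint_iff)
  moreover have "2 * card {e\<in>B. a\<in>e \<and> b\<in>e} + 2 = card V" using lam_eq[OF ab] .
  moreover have "6 * card {e\<in>B. a\<in>e} = (card V - 1) * (card V - 2)" using six_b[OF ab(1)] .
  ultimately show ?thesis by linarith
qed

lemma exists_g: assumes t: "tr V T ta tb" shows "\<exists>g\<in>B. g \<notin> F \<and> g \<notin> T"
proof (rule ccontr)
  assume H: "\<not> ?thesis"
  let ?X = "{e\<in>B. x\<in>e \<and> y \<notin> e}" and ?Y = "{e\<in>B. y\<in>e \<and> x \<notin> e}"
  have fT: "finite T" using tr_facts[OF t] by simp
  have "?X \<union> ?Y \<subseteq> T" using H unfolding F_def by auto
  hence "card (?X \<union> ?Y) \<le> card T" using fT by (rule card_mono[rotated])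
  moreover have "card (?X \<union> ?Y) = card ?X + card ?Y" using finB by (intro card_Un_disjoint) auto
  moreover have "card T + 1 = card V" using tr_facts(6)[OF t] .
  moreover have "6 * card ?X + 3 * (card V - 2) = (card V - 1) * (card V - 2)" using Xe_lem[OF xV yV xy] .
  moreover have "6 * card ?Y + 3 * (card V - 2) = (card V - 1) * (card V - 2)"
    using Xe_lem[OF yV xV] xy by auto
  ultimately have "2 * ((card V - 1) * (card V - 2)) \<le> 6 * (card V - 1) + 6 * (card V - 2)" by linarith
  thus False using arithB2[OF n8] by blast
qed

lemma three_in_g: assumes g: "g \<in> B" "g \<notin> F"
  shows "\<exists>c1 c2 c3. c1 \<in> g \<and> c2 \<in> g \<and> c3 \<in> g \<and> c1 \<noteq> c2 \<and> c1 \<noteq> c3 \<and> c2 \<noteq> c3 \<and>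
     c1 \<notin> {x,y} \<and> c2 \<notin> {x,y} \<and> \<not> (\<exists>e\<in>F. c1 \<in> e \<and> c2 \<in> e)"
proof -
  have fg: "finite g" "card g = 4" "g \<subseteq> V" using g blk fin_blk by auto
  have "\<not> (x \<in> g \<and> y \<in> g)" using g unfolding F_def by auto
  hence "card (g \<inter> {x,y}) \<le> 1" by (cases "x \<in> g"; cases "y \<in> g") auto
  moreover have "card g = card (g - {x,y}) + card (g \<inter> {x,y})"
    using fg(1) by (metis Diff_Diff_Int card_Diff_subset_Int card_mono finite_Diff inf_le1 le_add_diff_inverse2
      Int_commute finite_Int)
  ultimately have c3: "card (g - {x,y}) \<ge> 3" using fg by linarith
  then obtain a where a: "a \<in> g - {x,y}" by (metis all_not_in_conv card.empty zero_less_numeral not_le leI)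
  have "card (g - {x,y} - {a}) \<ge> 2" using c3 a fg by simp
  then obtain b where b: "b \<in> g - {x,y} - {a}" by (metis all_not_in_conv card.empty not_numeral_le_zero)
  have "card (g - {x,y} - {a} - {b}) \<ge> 1" using c3 a b fg by simp
  then obtain c where c: "c \<in> g - {x,y} - {a} - {b}" by (metis all_not_in_conv card.empty not_one_le_zero)
  have V: "a \<in> V" "b \<in> V" "c \<in> V" using a b c fg by auto
  show ?thesis
  proof (cases "\<exists>e\<in>F. a \<in> e \<and> b \<in> e")
    case False thus ?thesis using a b c by blast
  next
    case True
    then obtain e1 where e1: "e1 \<in> F" "a \<in> e1" "b \<in> e1" by auto
    have "\<not> (\<exists>e\<in>F. a \<in> e \<and> c \<in> e)"
    proof
      assume "\<exists>e\<in>F. a \<in> e \<and> c \<in> e"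
      then obtain e2 where e2: "e2 \<in> F" "a \<in> e2" "c \<in> e2" by auto
      have "e1 = e2" using F_block_uniq[of a e1 e2] a e1 e2 by auto
      hence "{x,y,a,b,c} \<subseteq> e1" using e1 e2 unfolding F_def by auto
      hence "card {x,y,a,b,c} \<le> card e1" using fin_blk e1 unfolding F_def by (intro card_mono) auto
      moreover have "card {x,y,a,b,c} = 5" using a b c xy by auto
      moreover have "card e1 = 4" using blk e1 unfolding F_def by auto
      ultimately show False by simp
    qed
    thus ?thesis using a b c by blast
  qed
qed

end


context sqsxy begin

lemma blk_pair: "e \<in> B \<Longrightarrow> \<exists>p. fst p \<in> e \<and> snd p \<in> e \<and> fst p \<noteq> snd p"
proof -
  assume e: "e \<in> B"
  hence "card e = 4" using blk by auto
  hence "card e \<ge> 2" by simp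
  then obtain a b where "a \<in> e" "b \<in> e" "a \<noteq> b"
    by (metis One_nat_def Suc_1 card_le_Suc0_iff_eq not_less_eq_eq fin_blk[OF e])
  thus ?thesis by (intro exI[of _ "(a,b)"]) auto
qed

lemma main_assign:
  "\<exists>pa pb. (\<forall>e\<in>B. pa e \<in> e \<and> pb e \<in> e \<and> pa e \<noteq> pb e) \<and>
     (\<forall>v\<in>V. even (card {e\<in>B. v \<in> {pa e, pb e}})) \<and> (\<forall>z\<in>V. (x,z) \<in> (adj B pa pb)\<^sup>*)"
proof -
  obtain T ta tb where t: "tr V T ta tb" using tree_exists by blast
  obtain g where g: "g \<in> B" "g \<notin> F" "g \<notin> T" using exists_g[OF t] by blast
  obtain c1 c2 c3 where c: "c1 \<in> g" "c2 \<in> g" "c3 \<in> g" "c1 \<noteq> c2" "c1 \<noteq> c3" "c2 \<noteq> c3"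
      "c1 \<notin> {x,y}" "c2 \<notin> {x,y}" "\<not> (\<exists>e\<in>F. c1 \<in> e \<and> c2 \<in> e)"
    using three_in_g[OF g(1,2)] by blast
  have "\<forall>e\<in>B. \<exists>p. fst p \<in> e \<and> snd p \<in> e \<and> fst p \<noteq> snd p" using blk_pair by blast
  then obtain \<psi> where psi: "\<And>e. e \<in> B \<Longrightarrow> fst (\<psi> e) \<in> e \<and> snd (\<psi> e) \<in> e \<and> fst (\<psi> e) \<noteq> snd (\<psi> e)"
    by metis
  have TB: "T \<subseteq> B" "T \<inter> F = {}" "finite T" using tr_facts[OF t] by auto
  have tT: "\<And>e. e \<in> T \<Longrightarrow> ta e \<in> e \<and> tb e \<in> e \<and> ta e \<noteq> tb e" using tr_facts(7)[OF t] by auto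
  define qa where "qa e = (if e \<in> T then ta e else if e = g then c3 else fst (\<psi> e))" for e
  define qb where "qb i e = (if e \<in> T then tb e else if e = g then (if i then c1 else c2) else snd (\<psi> e))"
    for i :: bool and e
  have qv: "\<And>i e. e \<in> B \<Longrightarrow> qa e \<in> e \<and> qb i e \<in> e \<and> qa e \<noteq> qb i e"
  proof -
    fix i e assume e: "e \<in> B"
    show "qa e \<in> e \<and> qb i e \<in> e \<and> qa e \<noteq> qb i e"
    proof (cases "e \<in> T")
      case True thus ?thesis using tT unfolding qa_def qb_def by simp
    next
      case nT: False
      show ?thesis
      proof (cases "e = g")
        case True thus ?thesis using nT c unfolding qa_def qb_def by simp
      next
        case False thus ?thesis using nT psi[OF e] unfolding qa_def qb_def by simp
      qed
    qed
  qed
  let ?R = "B - F"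
  have finR: "finite ?R" using finB by simp
  define D where "D i v = card {e\<in>?R. v \<in> {qa e, qb i e}}" for i v
  define Od where "Od i = {v\<in>V. odd (D i v)}" for i
  have evOd: "\<And>i. even (card (Od i))"
  proof -
    fix i
    have "(\<Sum>v\<in>V. D i v) = 2 * card ?R" unfolding D_def
      by (rule handshake[OF finV finR]) (use qv blk in \<open>auto\<close>)
    thus "even (card (Od i))" using parity_sum[OF finV, of "D i"] unfolding Od_def by simp
  qed
  define D0 where "D0 v = card {e\<in>?R - {g}. v \<in> {qa e, qb True e}}" for v
  have Dsplit: "\<And>i v. D i v = D0 v + (if v \<in> {c3, if i then c1 else c2} then 1 else 0)"
  proof -
    fix i v
    let ?S0 = "{e\<in>?R - {g}. v \<in> {qa e, qb True e}}"
    have eq: "\<And>e. e \<noteq> g \<Longrightarrow> qb i e = qb True e" unfolding qb_def by simp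
    have qg: "qa g = c3" "qb i g = (if i then c1 else c2)" using g unfolding qa_def qb_def by simp_all
    have gR: "g \<in> ?R" using g by simp
    have fS0: "finite ?S0" using finB by simp
    have g0: "g \<notin> ?S0" by simp
    show "D i v = D0 v + (if v \<in> {c3, if i then c1 else c2} then 1 else 0)"
    proof (cases "v \<in> {c3, if i then c1 else c2}")
      case True
      have "{e\<in>?R. v \<in> {qa e, qb i e}} = insert g ?S0"
      proof
        show "{e\<in>?R. v \<in> {qa e, qb i e}} \<subseteq> insert g ?S0"
        proof
          fix e assume e: "e \<in> {e\<in>?R. v \<in> {qa e, qb i e}}"
          show "e \<in> insert g ?S0"
          proof (cases "e = g")
            case False thus ?thesis using e eq[OF False] by simp
          qed simp
        qed
        show "insert g ?S0 \<subseteq> {e\<in>?R. v \<in> {qa e, qb i e}}"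
        proof
          fix e assume e: "e \<in> insert g ?S0"
          show "e \<in> {e\<in>?R. v \<in> {qa e, qb i e}}"
          proof (cases "e = g")
            case True thus ?thesis using gR qg \<open>v \<in> {c3, if i then c1 else c2}\<close> by auto
          next
            case False thus ?thesis using e eq[OF False] by simp
          qed
        qed
      qed
      hence "D i v = card ?S0 + 1" unfolding D_def using fS0 g0 by simp
      thus ?thesis using True unfolding D0_def by simp
    next
      case False
      have "{e\<in>?R. v \<in> {qa e, qb i e}} = ?S0"
      proof
        show "{e\<in>?R. v \<in> {qa e, qb i e}} \<subseteq> ?S0"
        proof
          fix e assume e: "e \<in> {e\<in>?R. v \<in> {qa e, qb i e}}"
          show "e \<in> ?S0"
          proof (cases "e = g")
            case False thus ?thesis using e eq[OF False] by simp
          next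
            case True thus ?thesis using e qg \<open>v \<notin> {c3, if i then c1 else c2}\<close> by simp
          qed
        qed
        show "?S0 \<subseteq> {e\<in>?R. v \<in> {qa e, qb i e}}"
        proof
          fix e assume e: "e \<in> ?S0"
          hence "e \<noteq> g" by simp
          thus "e \<in> {e\<in>?R. v \<in> {qa e, qb i e}}" using e eq[of e] by simp
        qed
      qed
      hence "D i v = card ?S0" unfolding D_def by simp
      thus ?thesis using False unfolding D0_def by simp
    qed
  qed
  obtain e1 where e1: "e1 \<in> F" "c1 \<in> e1"
    using F_block_ex[of c1] c blk g by auto
  obtain a b where ab: "e1 - {x,y} = {a,b}" "a \<noteq> b" using F_m[OF e1(1)] by blast
  obtain c1' where c1': "e1 - {x,y} = {c1, c1'}" "c1 \<noteq> c1'"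
  proof -
    have "c1 = a \<or> c1 = b" using ab e1 c by blast
    thus ?thesis using that ab by (metis insert_commute)
  qed
  have c1'c2: "c1' \<noteq> c2" using c(9) e1 c1' by blast
  have c1'c1: "c1' \<noteq> c1" using c1' by simp
  have flip1: "c1 \<in> Od False \<longleftrightarrow> c1 \<notin> Od True"
    using Dsplit[of False c1] Dsplit[of True c1] c c1'c2 unfolding Od_def using blk g by auto
  have flip2: "c1' \<in> Od False \<longleftrightarrow> c1' \<in> Od True"
    using Dsplit[of False c1'] Dsplit[of True c1'] c c1'c2 c1'c1 unfolding Od_def by auto
  have "\<exists>i. card ((e1 - {x,y}) \<inter> Od i) = 1"
  proof (cases "card ((e1 - {x,y}) \<inter> Od True) = 1")
    case True thus ?thesis by blast
  next
    case False
    hence "\<not> (c1 \<in> Od True \<longleftrightarrow> c1' \<notin> Od True)" using card_pair_int[OF c1'(2)] c1'(1) by simp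
    hence "c1 \<in> Od False \<longleftrightarrow> c1' \<notin> Od False" using flip1 flip2 by blast
    hence "card ((e1 - {x,y}) \<inter> Od False) = 1" using card_pair_int[OF c1'(2)] c1'(1) by simp
    thus ?thesis by blast
  qed
  then obtain i where i: "card ((e1 - {x,y}) \<inter> Od i) = 1" by blast
  have OdV: "Od i \<subseteq> V" unfolding Od_def by auto
  obtain fa fb where fab: "\<forall>e\<in>F. fa e \<in> e \<and> fb e \<in> e \<and> fa e \<noteq> fb e"
      "\<forall>v\<in>V. odd (card {e\<in>F. v \<in> {fa e, fb e}}) \<longleftrightarrow> v \<in> Od i"
    using absorb[OF OdV evOd e1(1) i] by blast
  define pa where "pa e = (if e \<in> F then fa e else qa e)" for e
  define pb where "pb e = (if e \<in> F then fb e else qb i e)" for e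
  have valid: "\<forall>e\<in>B. pa e \<in> e \<and> pb e \<in> e \<and> pa e \<noteq> pb e"
    using fab(1) qv unfolding pa_def pb_def by auto
  have FB: "F \<subseteq> B" unfolding F_def by auto
  have even: "\<forall>v\<in>V. even (card {e\<in>B. v \<in> {pa e, pb e}})"
  proof
    fix v assume v: "v \<in> V"
    have "{e\<in>B. v \<in> {pa e, pb e}} = {e\<in>F. v \<in> {fa e, fb e}} \<union> {e\<in>?R. v \<in> {qa e, qb i e}}"
      using FB unfolding pa_def pb_def by auto
    moreover have "{e\<in>F. v \<in> {fa e, fb e}} \<inter> {e\<in>?R. v \<in> {qa e, qb i e}} = {}" by auto
    moreover have "finite F" using finB FB finite_subset by blast
    hence "finite {e\<in>F. v \<in> {fa e, fb e}}" by simp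
    moreover have "finite {e\<in>?R. v \<in> {qa e, qb i e}}" using finB by simp
    ultimately have "card {e\<in>B. v \<in> {pa e, pb e}} = card {e\<in>F. v \<in> {fa e, fb e}} + D i v"
      unfolding D_def by (simp only: card_Un_disjoint)
    moreover have "odd (card {e\<in>F. v \<in> {fa e, fb e}}) \<longleftrightarrow> odd (D i v)"
      using fab(2) v unfolding Od_def by auto
    ultimately show "even (card {e\<in>B. v \<in> {pa e, pb e}})" by simp
  qed
  have "adj T ta tb \<subseteq> adj B pa pb"
  proof
    fix p assume "p \<in> adj T ta tb"
    then obtain e where e: "e \<in> T" "p = (ta e, tb e) \<or> p = (tb e, ta e)" unfolding adj_def by auto
    have "e \<in> B" "e \<notin> F" using e TB by auto
    hence "pa e = ta e" "pb e = tb e" using e unfolding pa_def pb_def qa_def qb_def by auto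
    thus "p \<in> adj B pa pb" using e \<open>e \<in> B\<close> unfolding adj_def by auto
  qed
  hence sub: "(adj T ta tb)\<^sup>* \<subseteq> (adj B pa pb)\<^sup>*" by (rule rtrancl_mono)
  have c0: "\<forall>z\<in>V. (x,z) \<in> (adj T ta tb)\<^sup>*" using t unfolding tr_def by simp
  have "\<forall>z\<in>V. (x,z) \<in> (adj B pa pb)\<^sup>*" using c0 sub by blast
  thus ?thesis using valid even by (intro exI[of _ pa] exI[of _ pb] conjI)
qed

end


lemma fiber_sum: assumes "finite R" "finite E"
  shows "(\<Sum>z\<in>R. card {e\<in>E. f e = z}) = card {e\<in>E. f e \<in> R}"
proof -
  have "{e\<in>E. f e \<in> R} = (\<Union>z\<in>R. {e\<in>E. f e = z})" by auto
  moreover have "card (\<Union>z\<in>R. {e\<in>E. f e = z}) = (\<Sum>z\<in>R. card {e\<in>E. f e = z})"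
    by (rule card_UN_disjoint) (use assms in auto)
  ultimately show ?thesis by simp
qed

locale ori =
  fixes V :: "'a set" and E :: "'b set" and pa pb :: "'b \<Rightarrow> 'a"
  assumes finV: "finite V" and finE: "finite E"
    and ends: "\<And>e. e \<in> E \<Longrightarrow> pa e \<in> V \<and> pb e \<in> V \<and> pa e \<noteq> pb e"
    and evn: "\<And>v. v \<in> V \<Longrightarrow> even (card {e\<in>E. pa e = v} + card {e\<in>E. pb e = v})"
begin

definition tlS where "tlS S e = (if e \<in> S then pb e else pa e)"
definition hdS where "hdS S e = (if e \<in> S then pa e else pb e)"
definition G where "G S = \<lparr>verts = V, arcs = E, tail = tlS S, head = hdS S\<rparr>"
definition outd where "outd S z = card {e\<in>E. tlS S e = z}"
definition ind where "ind S z = card {e\<in>E. hdS S e = z}"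
definition d where "d S z = int (outd S z) - int (ind S z)"
definition imb where "imb S = (\<Sum>z\<in>V. nat \<bar>d S z\<bar>)"

lemma G_simps[simp]: "verts (G S) = V" "arcs (G S) = E" "tail (G S) = tlS S" "head (G S) = hdS S"
  unfolding G_def by auto

lemma fin_G: "fin_digraph (G S)"
  by unfold_locales (use ends finV finE in \<open>auto simp: tlS_def hdS_def\<close>)

lemma tlS_V: "e \<in> E \<Longrightarrow> tlS S e \<in> V" and hdS_V: "e \<in> E \<Longrightarrow> hdS S e \<in> V"
  using ends unfolding tlS_def hdS_def by auto

lemma deg_even: assumes "z \<in> V" shows "even (outd S z + ind S z)"
proof -
  have a: "outd S z = card {e\<in>E \<inter> S. pb e = z} + card {e\<in>E - S. pa e = z}"
  proof -
    have "{e\<in>E. tlS S e = z} = {e\<in>E \<inter> S. pb e = z} \<union> {e\<in>E - S. pa e = z}" unfolding tlS_def by auto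
    thus ?thesis unfolding outd_def using finE by (simp add: card_Un_disjoint disjoint_iff)
  qed
  have b: "ind S z = card {e\<in>E \<inter> S. pa e = z} + card {e\<in>E - S. pb e = z}"
  proof -
    have "{e\<in>E. hdS S e = z} = {e\<in>E \<inter> S. pa e = z} \<union> {e\<in>E - S. pb e = z}" unfolding hdS_def by auto
    thus ?thesis unfolding ind_def using finE by (simp add: card_Un_disjoint disjoint_iff)
  qed
  have c: "card {e\<in>E. pa e = z} = card {e\<in>E \<inter> S. pa e = z} + card {e\<in>E - S. pa e = z}"
  proof -
    have "{e\<in>E. pa e = z} = {e\<in>E \<inter> S. pa e = z} \<union> {e\<in>E - S. pa e = z}" by auto
    thus ?thesis using finE by (simp add: card_Un_disjoint disjoint_iff)
  qed
  have e: "card {e\<in>E. pb e = z} = card {e\<in>E \<inter> S. pb e = z} + card {e\<in>E - S. pb e = z}"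
  proof -
    have "{e\<in>E. pb e = z} = {e\<in>E \<inter> S. pb e = z} \<union> {e\<in>E - S. pb e = z}" by auto
    thus ?thesis using finE by (simp add: card_Un_disjoint disjoint_iff)
  qed
  have "outd S z + ind S z = card {e\<in>E. pa e = z} + card {e\<in>E. pb e = z}" using a b c e by simp
  thus ?thesis using evn[OF assms] by simp
qed

lemma d_even: assumes "z \<in> V" shows "even (d S z)"
proof -
  have "even (int (outd S z + ind S z))" using deg_even[OF assms, of S] by simp
  moreover have "d S z = int (outd S z + ind S z) - 2 * int (ind S z)" unfolding d_def by simp
  ultimately show ?thesis by simp
qed

lemma sum_d: "(\<Sum>z\<in>V. d S z) = 0"
proof -
  have "(\<Sum>z\<in>V. outd S z) = card E"
    using fiber_sum[OF finV finE, of "tlS S"] tlS_V unfolding outd_def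
    by (metis (no_types, lifting) Collect_cong Collect_mem_eq)
  moreover have "(\<Sum>z\<in>V. ind S z) = card E"
    using fiber_sum[OF finV finE, of "hdS S"] hdS_V unfolding ind_def
    by (metis (no_types, lifting) Collect_cong Collect_mem_eq)
  ultimately show ?thesis unfolding d_def by (simp add: sum_subtractf of_nat_sum[symmetric])
qed

definition flipS where "flipS S P = (S - P) \<union> (P - S)"

lemma flip_d: assumes "P \<subseteq> E"
  shows "d (flipS S P) z = d S z + 2 * (int (card {e\<in>P. hdS S e = z}) - int (card {e\<in>P. tlS S e = z}))"
proof -
  let ?S' = "flipS S P"
  have t': "\<And>e. e \<in> P \<Longrightarrow> tlS ?S' e = hdS S e" "\<And>e. e \<in> P \<Longrightarrow> hdS ?S' e = tlS S e"
    "\<And>e. e \<notin> P \<Longrightarrow> tlS ?S' e = tlS S e" "\<And>e. e \<notin> P \<Longrightarrow> hdS ?S' e = hdS S e"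
    unfolding flipS_def tlS_def hdS_def by auto
  have fP: "finite P" using assms finE finite_subset by blast
  have split: "\<And>f. card {e\<in>E. f e = z} = card {e\<in>E - P. f e = z} + card {e\<in>P. f e = z}"
  proof -
    fix f :: "'b \<Rightarrow> 'a"
    have "{e\<in>E. f e = z} = {e\<in>E - P. f e = z} \<union> {e\<in>P. f e = z}" using assms by auto
    thus "card {e\<in>E. f e = z} = card {e\<in>E - P. f e = z} + card {e\<in>P. f e = z}"
      using finE fP by (simp add: card_Un_disjoint disjoint_iff)
  qed
  have o1: "outd ?S' z = card {e\<in>E - P. tlS S e = z} + card {e\<in>P. hdS S e = z}"
  proof -
    have "{e\<in>E - P. tlS ?S' e = z} = {e\<in>E - P. tlS S e = z}" using t' by auto
    moreover have "{e\<in>P. tlS ?S' e = z} = {e\<in>P. hdS S e = z}" using t' by auto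
    ultimately show ?thesis unfolding outd_def using split[of "tlS ?S'"] by simp
  qed
  have i1: "ind ?S' z = card {e\<in>E - P. hdS S e = z} + card {e\<in>P. tlS S e = z}"
  proof -
    have "{e\<in>E - P. hdS ?S' e = z} = {e\<in>E - P. hdS S e = z}" using t' by auto
    moreover have "{e\<in>P. hdS ?S' e = z} = {e\<in>P. tlS S e = z}" using t' by auto
    ultimately show ?thesis unfolding ind_def using split[of "hdS ?S'"] by simp
  qed
  have o0: "outd S z = card {e\<in>E - P. tlS S e = z} + card {e\<in>P. tlS S e = z}"
    unfolding outd_def using split by simp
  have i0: "ind S z = card {e\<in>E - P. hdS S e = z} + card {e\<in>P. hdS S e = z}"
    unfolding ind_def using split by simp
  show ?thesis unfolding d_def using o1 i1 o0 i0 by simp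
qed

lemma flip_sub: "S \<subseteq> E \<Longrightarrow> P \<subseteq> E \<Longrightarrow> flipS S P \<subseteq> E" unfolding flipS_def by auto

end


context ori begin

lemma trail_bal:
  assumes "pre_digraph.trail (G S) v p w" "v \<noteq> w" "z \<in> V"
  shows "int (card {e\<in>set p. hdS S e = z}) - int (card {e\<in>set p. tlS S e = z}) =
      (if z = v then -1 else if z = w then 1 else 0)"
proof -
  interpret fin_digraph "G S" by (rule fin_G)
  have sp: "set p \<subseteq> E" using assms(1) unfolding trail_def awalk_def by auto
  have eq: "arc_set_balance z (set p) = int (card {e\<in>set p. hdS S e = z}) - int (card {e\<in>set p. tlS S e = z})"
  proof -
    have "in_arcs (G S) z \<inter> set p = {e\<in>set p. hdS S e = z}" "out_arcs (G S) z \<inter> set p = {e\<in>set p. tlS S e = z}"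
      using sp unfolding in_arcs_def out_arcs_def by auto
    thus ?thesis unfolding arc_set_balance_def by simp
  qed
  show ?thesis
  proof (rule trail_arc_balanceE[OF assms(1)])
    assume a: "\<And>w'. \<lbrakk>v = w \<or> w' \<noteq> v \<and> w' \<noteq> w; w' \<in> verts (G S)\<rbrakk> \<Longrightarrow> arc_balance w' p = 0"
      and b: "v \<noteq> w \<Longrightarrow> arc_balance v p = - 1" and c: "v \<noteq> w \<Longrightarrow> arc_balance w p = 1"
    show ?thesis using a[of z] b c assms(2,3) eq by auto
  qed
qed

lemma balanced: "\<exists>S. S \<subseteq> E \<and> (\<forall>z\<in>V. outd S z = ind S z)"
proof -
  obtain S where S: "S \<subseteq> E" "\<And>S'. S' \<subseteq> E \<Longrightarrow> imb S \<le> imb S'"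
    using ex_has_least_nat[of "\<lambda>S. S \<subseteq> E" "{}" imb] by auto
  show ?thesis
  proof (rule ccontr)
    assume H: "\<not> ?thesis"
    then obtain z0 where z0: "z0 \<in> V" "d S z0 \<noteq> 0" using S(1) unfolding d_def by auto
    have "\<exists>v\<in>V. d S v > 0"
    proof (rule ccontr)
      assume "\<not> ?thesis"
      hence le: "\<forall>z\<in>V. d S z \<le> 0" by auto
      hence "d S z0 < 0" using z0 by force
      hence "(\<Sum>z\<in>V. d S z) < (\<Sum>z\<in>V. (0::int))"
        using le z0 by (intro sum_strict_mono_ex1[OF finV]) auto
      thus False using sum_d by simp
    qed
    then obtain v where v: "v \<in> V" "d S v > 0" by auto
    interpret fin_digraph "G S" by (rule fin_G)
    let ?R = "{w. v \<rightarrow>\<^sup>*\<^bsub>G S\<^esub> w}"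
    have RV: "?R \<subseteq> V" by (auto elim: reachable_in_vertsE)
    have fR: "finite ?R" using RV finV finite_subset by blast
    have vv: "v \<rightarrow>\<^sup>*\<^bsub>G S\<^esub> v" by (rule reachable_refl) (simp add: v(1))
    hence vR: "v \<in> ?R" by simp
    have "\<exists>w\<in>?R. d S w < 0"
    proof (rule ccontr)
      assume "\<not> ?thesis"
      hence ge: "\<forall>w\<in>?R. 0 \<le> d S w" by auto
      have "(\<Sum>w\<in>?R. (0::int)) < (\<Sum>w\<in>?R. d S w)"
        using ge vR v(2) by (intro sum_strict_mono_ex1[OF fR]) blast+
      hence pos: "0 < (\<Sum>w\<in>?R. d S w)" by simp
      have "(\<Sum>w\<in>?R. d S w) = int (\<Sum>w\<in>?R. outd S w) - int (\<Sum>w\<in>?R. ind S w)"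
        unfolding d_def by (simp add: sum_subtractf)
      also have "(\<Sum>w\<in>?R. outd S w) = card {e\<in>E. tlS S e \<in> ?R}"
        unfolding outd_def by (rule fiber_sum[OF fR finE])
      also have "(\<Sum>w\<in>?R. ind S w) = card {e\<in>E. hdS S e \<in> ?R}"
        unfolding ind_def by (rule fiber_sum[OF fR finE])
      finally have eqs: "(\<Sum>w\<in>?R. d S w) = int (card {e\<in>E. tlS S e \<in> ?R}) - int (card {e\<in>E. hdS S e \<in> ?R})" .
      have "{e\<in>E. tlS S e \<in> ?R} \<subseteq> {e\<in>E. hdS S e \<in> ?R}"
      proof
        fix e assume e: "e \<in> {e\<in>E. tlS S e \<in> ?R}"
        have "tlS S e \<rightarrow>\<^bsub>G S\<^esub> hdS S e" using e by (intro dominatesI[of e]) (auto simp: arc_to_ends_def)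
        hence "v \<rightarrow>\<^sup>*\<^bsub>G S\<^esub> hdS S e" using e reachable_adj_trans by auto
        thus "e \<in> {e\<in>E. hdS S e \<in> ?R}" using e by auto
      qed
      hence "card {e\<in>E. tlS S e \<in> ?R} \<le> card {e\<in>E. hdS S e \<in> ?R}" using finE by (intro card_mono) auto
      thus False using eqs pos by linarith
    qed
    then obtain w where w: "v \<rightarrow>\<^sup>*\<^bsub>G S\<^esub> w" "d S w < 0" by auto
    have wV: "w \<in> V" using w(1) by (auto elim: reachable_in_vertsE)
    have vw: "v \<noteq> w" using v w by auto
    obtain p where p: "apath v p w" using w(1) reachable_apath by blast
    have tr: "trail v p w"
    proof -
      have aw: "awalk v p w" and dv: "distinct (awalk_verts v p)" using p unfolding apath_def by auto
      have "p \<noteq> []" using aw vw by (auto simp: awalk_Nil_iff)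
      hence "distinct (map (tlS S) p)" using dv by (simp add: awalk_verts_conv)
      hence "distinct p" by (simp add: distinct_map)
      thus ?thesis using aw unfolding trail_def by simp
    qed
    have sp: "set p \<subseteq> E" using tr unfolding trail_def awalk_def by auto
    let ?S' = "flipS S (set p)"
    let ?bal = "\<lambda>z. int (card {e\<in>set p. hdS S e = z}) - int (card {e\<in>set p. tlS S e = z})"
    have dS': "\<And>z. d ?S' z = d S z + 2 * ?bal z" using flip_d[OF sp] by simp
    have bal: "\<And>z. z \<in> V \<Longrightarrow> ?bal z = (if z = v then -1 else if z = w then 1 else 0)"
      using trail_bal[OF tr vw] by simp
    have ev: "even (d S v)" "even (d S w)" using d_even v(1) wV by auto
    have dv2: "d S v \<ge> 2" using ev(1) v(2) by presburger
    have dw2: "d S w \<le> -2" using ev(2) w(2) by presburger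
    have av: "nat \<bar>d ?S' v\<bar> + 2 = nat \<bar>d S v\<bar>" using dS'[of v] bal[OF v(1)] dv2 by simp
    have aw: "nat \<bar>d ?S' w\<bar> + 2 = nat \<bar>d S w\<bar>" using dS'[of w] bal[OF wV] dw2 vw by simp
    have rest: "(\<Sum>z\<in>V - {v} - {w}. nat \<bar>d ?S' z\<bar>) = (\<Sum>z\<in>V - {v} - {w}. nat \<bar>d S z\<bar>)"
    proof (rule sum.cong[OF refl])
      fix z assume z: "z \<in> V - {v} - {w}"
      hence "?bal z = 0" using bal[of z] by auto
      hence "d ?S' z = d S z" using dS'[of z] by simp
      thus "nat \<bar>d ?S' z\<bar> = nat \<bar>d S z\<bar>" by simp
    qed
    have decomp: "\<And>f::'a \<Rightarrow> nat. (\<Sum>z\<in>V. f z) = f v + f w + (\<Sum>z\<in>V - {v} - {w}. f z)"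
    proof -
      fix f :: "'a \<Rightarrow> nat"
      have "(\<Sum>z\<in>V. f z) = f v + (\<Sum>z\<in>V - {v}. f z)" using sum.remove[OF finV v(1)] .
      moreover have "(\<Sum>z\<in>V - {v}. f z) = f w + (\<Sum>z\<in>V - {v} - {w}. f z)"
        using sum.remove[of "V - {v}" w f] finV wV vw by simp
      ultimately show "(\<Sum>z\<in>V. f z) = f v + f w + (\<Sum>z\<in>V - {v} - {w}. f z)" by simp
    qed
    have "imb ?S' + 4 = imb S"
      unfolding imb_def using decomp[of "\<lambda>z. nat \<bar>d ?S' z\<bar>"] decomp[of "\<lambda>z. nat \<bar>d S z\<bar>"] av aw rest by simp
    moreover have "imb S \<le> imb ?S'" using S(2)[OF flip_sub[OF S(1) sp]] .
    ultimately show False by simp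
  qed
qed

end


lemma my_cas_nth: "pre_digraph.cas G u p v \<Longrightarrow> Suc i < length p \<Longrightarrow> tail G (p ! Suc i) = head G (p ! i)"
proof (induct p arbitrary: u i)
  case Nil thus ?case by simp
next
  case (Cons e es)
  show ?case
  proof (cases i)
    case 0 thus ?thesis using Cons.prems by (cases es) (auto simp: pre_digraph.cas.simps)
  next
    case (Suc j)
    have "pre_digraph.cas G (head G e) es v" using Cons.prems by (simp add: pre_digraph.cas.simps)
    thus ?thesis using Cons.hyps[of "head G e" j] Cons.prems Suc by simp
  qed
qed

lemma my_cas_ends: "pre_digraph.cas G u p v \<Longrightarrow> p \<noteq> [] \<Longrightarrow> tail G (p ! 0) = u \<and> head G (last p) = v"
proof (induct p arbitrary: u)
  case Nil thus ?case by simp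
next
  case (Cons e es)
  thus ?case by (cases es) (auto simp: pre_digraph.cas.simps)
qed

context sqsxy begin

theorem tour_exists: "has_spanning_euler_tour V B"
proof -
  obtain pa pb where pp: "\<forall>e\<in>B. pa e \<in> e \<and> pb e \<in> e \<and> pa e \<noteq> pb e"
     "\<forall>v\<in>V. even (card {e\<in>B. v \<in> {pa e, pb e}})" "\<forall>z\<in>V. (x,z) \<in> (adj B pa pb)\<^sup>*"
    using main_assign by blast
  have ends: "\<And>e. e \<in> B \<Longrightarrow> pa e \<in> V \<and> pb e \<in> V \<and> pa e \<noteq> pb e" using pp(1) blk by blast
  have evn: "\<And>v. v \<in> V \<Longrightarrow> even (card {e\<in>B. pa e = v} + card {e\<in>B. pb e = v})"
  proof -
    fix v assume v: "v \<in> V"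
    have "{e\<in>B. v \<in> {pa e, pb e}} = {e\<in>B. pa e = v} \<union> {e\<in>B. pb e = v}" by auto
    moreover have "{e\<in>B. pa e = v} \<inter> {e\<in>B. pb e = v} = {}" using pp(1) by auto
    ultimately have "card {e\<in>B. v \<in> {pa e, pb e}} = card {e\<in>B. pa e = v} + card {e\<in>B. pb e = v}"
      using finB by (simp add: card_Un_disjoint)
    moreover have "even (card {e\<in>B. v \<in> {pa e, pb e}})" using pp(2) v by blast
    ultimately show "even (card {e\<in>B. pa e = v} + card {e\<in>B. pb e = v})" by simp
  qed
  interpret O: ori V B pa pb using finV finB ends evn by unfold_locales auto
  obtain S where S: "S \<subseteq> B" "\<forall>z\<in>V. O.outd S z = O.ind S z" using O.balanced by blast
  let ?G = "O.G S"
  interpret fin_digraph ?G by (rule O.fin_G)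
  have symeq: "(arcs_ends ?G)\<^sup>s = adj B pa pb"
  proof -
    have "arcs_ends ?G = {(O.tlS S e, O.hdS S e) |e. e \<in> B}" unfolding arcs_ends_def arc_to_ends_def by auto
    show ?thesis
    proof
      show "(arcs_ends ?G)\<^sup>s \<subseteq> adj B pa pb"
      proof
        fix q assume "q \<in> (arcs_ends ?G)\<^sup>s"
        then obtain e where e: "e \<in> B" "q = (O.tlS S e, O.hdS S e) \<or> q = (O.hdS S e, O.tlS S e)"
          unfolding symcl_def \<open>arcs_ends ?G = _\<close> by auto
        thus "q \<in> adj B pa pb" unfolding adj_def O.tlS_def O.hdS_def by (cases "e \<in> S") auto
      qed
      show "adj B pa pb \<subseteq> (arcs_ends ?G)\<^sup>s"
      proof
        fix q assume "q \<in> adj B pa pb"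
        then obtain e where e: "e \<in> B" "q = (pa e, pb e) \<or> q = (pb e, pa e)" unfolding adj_def by auto
        have "(O.tlS S e, O.hdS S e) \<in> arcs_ends ?G" using e(1) \<open>arcs_ends ?G = _\<close> by auto
        hence "(O.tlS S e, O.hdS S e) \<in> (arcs_ends ?G)\<^sup>s" "(O.hdS S e, O.tlS S e) \<in> (arcs_ends ?G)\<^sup>s"
          unfolding symcl_def by auto
        thus "q \<in> (arcs_ends ?G)\<^sup>s" using e(2) unfolding O.tlS_def O.hdS_def by (cases "e \<in> S") auto
      qed
    qed
  qed
  have symA: "sym (adj B pa pb)" unfolding adj_def sym_def by auto
  have conn: "connected ?G"
    unfolding connected_conv
  proof (intro conjI ballI)
    show "verts ?G \<noteq> {}" using xV by auto
  next
    fix u v assume uv: "u \<in> verts ?G" "v \<in> verts ?G"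
    have "(x,u) \<in> (adj B pa pb)\<^sup>*" "(x,v) \<in> (adj B pa pb)\<^sup>*" using pp(3) uv by auto
    hence "(u,x) \<in> (adj B pa pb)\<^sup>*" using symA by (meson sym_rtrancl symE)
    hence uv': "(u,v) \<in> (adj B pa pb)\<^sup>*" using \<open>(x,v) \<in> _\<close> by simp
    show "(u, v) \<in> rtrancl_on (verts ?G) ((arcs_ends ?G)\<^sup>s)"
      unfolding symeq
      by (rule rtrancl_consistent_rtrancl_on[OF uv']) (use uv ends in \<open>auto simp: adj_def\<close>)
  qed
  have deg: "\<And>u. u \<in> verts ?G \<Longrightarrow> in_degree ?G u = out_degree ?G u"
    using S(2) unfolding in_degree_def out_degree_def in_arcs_def out_arcs_def O.outd_def O.ind_def by simp
  obtain u p where eu: "euler_trail u p u" using closed_euler1[OF conn deg] by blast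
  have tr: "trail u p u" and sp: "set p = B" and sv: "set (awalk_verts u p) = V"
    using eu unfolding euler_trail_def by auto
  have cas: "cas u p u" and dp: "distinct p" using tr unfolding trail_def awalk_def by auto
  have "card {x,y} < card V" using n8 xy by simp
  then obtain u3 where u3: "u3 \<in> V" "u3 \<notin> {x,y}" using exists_outside[of "{x,y}"] xV yV by auto
  obtain e0 where "e0 \<in> B" using ex3[of x y u3] xV yV xy u3 by auto
  hence pne: "p \<noteq> []" using sp by auto
  define vs where "vs = map (O.tlS S) p"
  have len: "length vs = length p" unfolding vs_def by simp
  have nxt: "\<And>i. i < length p \<Longrightarrow> vs ! ((i + 1) mod length p) = O.hdS S (p ! i)"
  proof -
    fix i assume i: "i < length p"
    show "vs ! ((i + 1) mod length p) = O.hdS S (p ! i)"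
    proof (cases "Suc i < length p")
      case True
      thus ?thesis using my_cas_nth[OF cas True] unfolding vs_def by simp
    next
      case False
      hence "Suc i = length p" using i by simp
      hence il: "i = length p - 1" by simp
      have "(i + 1) mod length p = 0" using \<open>Suc i = length p\<close> by simp
      moreover have "p ! i = last p" using il pne by (simp add: last_conv_nth)
      ultimately show ?thesis using my_cas_ends[OF cas pne] pne unfolding vs_def by simp
    qed
  qed
  have tlin: "\<And>e. e \<in> B \<Longrightarrow> O.tlS S e \<in> e \<and> O.hdS S e \<in> e \<and> O.tlS S e \<noteq> O.hdS S e"
    using pp(1) unfolding O.tlS_def O.hdS_def by auto
  have cw: "closed_walk B vs p"
    unfolding closed_walk_def
  proof (intro conjI allI impI)
    show "length vs = length p" by (rule len)
    show "1 \<le> length vs" using pne len by (cases p) auto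
  next
    fix i assume i: "i < length vs"
    hence ip: "i < length p" using len by simp
    hence pB: "p ! i \<in> B" using sp nth_mem by blast
    show "p ! i \<in> B" by (rule pB)
    show "{vs ! i, vs ! ((i + 1) mod length vs)} \<subseteq> p ! i"
      using nxt[OF ip] tlin[OF pB] ip len unfolding vs_def by simp
    show "vs ! i \<noteq> vs ! ((i + 1) mod length vs)"
      using nxt[OF ip] tlin[OF pB] ip len unfolding vs_def by simp
  qed
  have "V \<subseteq> set vs"
  proof -
    have "awalk_verts u p = map (O.tlS S) p @ [O.hdS S (last p)]" using pne by (simp add: awalk_verts_conv)
    moreover have "O.hdS S (last p) = O.tlS S (p ! 0)" using my_cas_ends[OF cas pne] by simp
    moreover have "O.tlS S (p ! 0) \<in> set vs" using pne unfolding vs_def by simp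
    ultimately show ?thesis using sv unfolding vs_def by auto
  qed
  thus ?thesis using cw dp sp unfolding has_spanning_euler_tour_def euler_tour_def by blast
qed

end

lemma arith_final: fixes n :: nat
  assumes "n \<ge> 5" "even n" "3 dvd (n - 1) * (n - 2)"
  shows "n \<ge> 8 \<and> (n mod 6 = 2 \<or> n mod 6 = 4)"
proof -
  have "n mod 3 \<noteq> 0"
  proof
    assume "n mod 3 = 0"
    then obtain k where k: "n = 3 * k" by auto
    hence "k \<ge> 2" using assms(1) by simp
    then obtain m where m: "k = m + 1" using less_eq_Suc_le by (intro that[of "k - 1"]) simp
    hence "n - 1 = 3*m + 2" "n - 2 = 3*m + 1" using k by auto
    hence "(n - 1) * (n - 2) = 3 * (3*m*m + 3*m) + 2" by (simp add: algebra_simps)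
    hence "\<not> 3 dvd (n - 1) * (n - 2)" by presburger
    thus False using assms(3) by simp
  qed
  thus ?thesis using assms(1,2) by presburger
qed

context sqs begin

lemma necessary:
  assumes "has_spanning_euler_tour V B"
  shows "card V \<ge> 8 \<and> (card V mod 6 = 2 \<or> card V mod 6 = 4)"
proof -
  obtain vs es where t: "euler_tour B vs es" "V \<subseteq> set vs"
    using assms unfolding has_spanning_euler_tour_def by blast
  have cw: "closed_walk B vs es" and de: "distinct es" and se: "set es = B"
    using t(1) unfolding euler_tour_def by auto
  have len: "length vs = length es" "length vs \<ge> 1" using cw unfolding closed_walk_def by auto
  have step: "\<And>i. i < length vs \<Longrightarrow> vs ! i \<noteq> vs ! ((i + 1) mod length vs)"
    using cw unfolding closed_walk_def by auto
  have "length vs \<noteq> 1"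
  proof
    assume "length vs = 1"
    thus False using step[of 0] by simp
  qed
  hence l2: "length es \<ge> 2" using len by simp
  have l01: "0 < length es" "1 < length es" using l2 by auto
  have e01: "es ! 0 \<in> B" "es ! 1 \<in> B" using l01 se nth_mem by blast+
  have "es ! 0 \<noteq> es ! 1" using nth_eq_iff_index_eq[OF de l01] by simp
  note e01 = e01 this
  let ?e1 = "es ! 0" and ?e2 = "es ! 1"
  have c: "card ?e1 = 4" "card ?e2 = 4" "finite ?e1" "finite ?e2" "?e1 \<subseteq> V" "?e2 \<subseteq> V"
    using e01 blk fin_blk by auto
  have "card (?e1 \<union> ?e2) \<ge> 5"
  proof (rule ccontr)
    assume "\<not> ?thesis"
    hence le: "card (?e1 \<union> ?e2) \<le> card ?e1" using c by simp
    have fU: "finite (?e1 \<union> ?e2)" using c by simp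
    have "?e1 = ?e1 \<union> ?e2" by (rule card_seteq[OF fU _ le]) simp
    hence "?e2 \<subseteq> ?e1" by blast
    hence "?e2 = ?e1" using card_seteq[OF c(3) _ ] c by simp
    thus False using e01 by simp
  qed
  moreover have "card (?e1 \<union> ?e2) \<le> card V" using c finV by (intro card_mono) auto
  ultimately have n5: "card V \<ge> 5" by simp
  obtain p q where pq: "p \<in> ?e1" "q \<in> ?e1" "p \<noteq> q"
  proof -
    have "card ?e1 \<ge> 2" using c by simp
    then obtain A where "A \<subseteq> ?e1" "card A = 2" by (meson obtain_subset_with_card_n)
    then obtain a b where "A = {a,b}" "a \<noteq> b" by (meson card_2_iff)
    thus ?thesis using that \<open>A \<subseteq> ?e1\<close> by blast
  qed
  have "2 * card {e\<in>B. p \<in> e \<and> q \<in> e} + 2 = card V" using pairpart[of p q] pq c by auto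
  hence ev: "even (card V)" by presburger
  have "6 * card {e\<in>B. p\<in>e} = (card V - 1) * (card V - 2)" using six_b[of p] pq c by auto
  hence "3 dvd (card V - 1) * (card V - 2)" unfolding dvd_def by (intro exI[of _ "2 * card {e\<in>B. p\<in>e}"]) simp
  thus ?thesis using arith_final n5 ev by blast
qed

end

theorem corollary1p4:
  fixes V :: "'a set" and B :: "'a set set" and n :: nat
  assumes "SQS V B" and "card V = n"
  shows "has_spanning_euler_tour V B \<longleftrightarrow> n \<ge> 8 \<and> (n mod 6 = 2 \<or> n mod 6 = 4)"
proof -
  interpret sqs V B by unfold_locales (rule assms(1))
  show ?thesis
  proof
    assume "has_spanning_euler_tour V B"
    thus "n \<ge> 8 \<and> (n mod 6 = 2 \<or> n mod 6 = 4)" using necessary assms(2) by simp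
  next
    assume H: "n \<ge> 8 \<and> (n mod 6 = 2 \<or> n mod 6 = 4)"
    hence "card V \<ge> 2" using assms(2) by simp
    then obtain A where "A \<subseteq> V" "card A = 2" by (meson obtain_subset_with_card_n)
    then obtain x y where "A = {x,y}" "x \<noteq> y" by (meson card_2_iff)
    hence xy: "x \<in> V" "y \<in> V" "x \<noteq> y" using \<open>A \<subseteq> V\<close> by auto
    interpret sqsxy V B x y by unfold_locales (use xy H assms(2) in auto)
    show "has_spanning_euler_tour V B" by (rule tour_exists)
  qed
qed

end
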